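(* For every simplicial complex $\Delta$ on a finite vertex set $[m]$ one has $\mathrm{Inc}(\mathcal{C}(\Delta))\subseteq\mathcal{C}(\mathrm{Inc}(\Delta))$.
   Context: $\mathbb{N}=\{1,2,3,\dots\}$, $[m]=\{1,\dots,m\}$. A simplicial complex on $[m]$ is a collection of subsets of $[m]$ closed under taking subsets. For $d\ge1$, $F_d(\Delta)$ is the set of $d$-element faces of $\Delta$, viewed in $\binom{\mathbb{N}}{d}$ (the $d$-subsets of $\mathbb{N}$, written $\mathbf{u}=(u_1,\dots,u_d)$ with $u_1<\cdots<u_d$). Squashed order: $\mathbf{u}<\mathbf{v}$ iff the largest element of the symmetric difference of $\mathbf u,\mathbf v$ lies in $\mathbf{v}$. For finite $\mathcal{F}\subseteq\binom{\mathbb{N}}{d}$, $\mathcal{C}(\mathcal{F})$ is the set of the $|\mathcal{F}|$ smallest elements of $\binom{\mathbb{N}}{d}$ in the squashed order; for a simplicial complex, $\mathcal{C}(\Delta)=\bigcup_{d\ge1}\mathcal{C}(F_d(\Delta))$ (together with the empty face). $\mathrm{Inc}_1$ is the set of maps $\pi\colon\mathbb{N}\to\mathbb{N}$ with $\pi(j)<\pi(j+1)$ and $\pi(j)\le j+1$ for all $j$, acting by $\pi(\mathbf{u})=(\pi(u_1),\ldots,\pi(u_d))$; $\mathrm{Inc}(\mathcal{F})=\{\pi(\mathbf{u})\mid\mathbf{u}\in\mathcal{F},\pi\in\mathrm{Inc}_1\}$ and $\mathrm{Inc}(\Delta)=\bigcup_{d\ge1}\mathrm{Inc}(F_d(\Delta))$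 (together with the empty face). *)

theory Defs
  imports Main
begin

definition simplicial_complex_on :: "nat \<Rightarrow> nat set set \<Rightarrow> bool" where
  "simplicial_complex_on m \<Delta> \<longleftrightarrow>
     (\<forall>F\<in>\<Delta>. F \<subseteq> {1..m}) \<and> (\<forall>F\<in>\<Delta>. \<forall>G. G \<subseteq> F \<longrightarrow> G \<in> \<Delta>)"

definition dsets :: "nat \<Rightarrow> nat set set" where
  "dsets d = {u. finite u \<and> card u = d \<and> 0 \<notin> u}"

definition faces :: "nat \<Rightarrow> nat set set \<Rightarrow> nat set set" where
  "faces d \<Delta> = {F \<in> \<Delta>. finite F \<and> card F = d}"

definition sq_less :: "nat set \<Rightarrow> nat set \<Rightarrow> bool" where
  "sq_less u v \<longleftrightarrow> u \<noteq> v \<and> Max ((u - v) \<union> (v - u)) \<in> v"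

text \<open>C(F): the |F| smallest elements of dsets d in squashed order, i.e. those
  elements having fewer than |F| predecessors.\<close>
definition compr :: "nat \<Rightarrow> nat set set \<Rightarrow> nat set set" where
  "compr d \<F> = {u \<in> dsets d. card {v \<in> dsets d. sq_less v u} < card \<F>}"

definition compr_cx :: "nat set set \<Rightarrow> nat set set" where
  "compr_cx \<Delta> = {{}} \<union> (\<Union>d\<in>{1..}. compr d (faces d \<Delta>))"

definition Inc1 :: "(nat \<Rightarrow> nat) set" where
  "Inc1 = {\<pi>. \<forall>j\<ge>1. 1 \<le> \<pi> j \<and> \<pi> j < \<pi> (Suc j) \<and> \<pi> j \<le> j + 1}"

definition IncF :: "nat set set \<Rightarrow> nat set set" where
  "IncF \<F> = {\<pi> ` u | u \<pi>. u \<in> \<F> \<and> \<pi> \<in> Inc1}"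

definition Inc_cx :: "nat set set \<Rightarrow> nat set set" where
  "Inc_cx \<Delta> = {{}} \<union> (\<Union>d\<in>{1..}. IncF (faces d \<Delta>))"

end

theory Submission
  imports Defs
begin

section \<open>Generic strict total orders on finite sets\<close>

locale sto =
  fixes X :: "'a set" and R :: "'a \<Rightarrow> 'a \<Rightarrow> bool"
  assumes finX: "finite X"
    and irr: "\<And>x. \<not> R x x"
    and trn: "\<And>x y z. R x y \<Longrightarrow> R y z \<Longrightarrow> R x z"
    and tot: "\<And>x y. x \<in> X \<Longrightarrow> y \<in> X \<Longrightarrow> x \<noteq> y \<Longrightarrow> R x y \<or> R y x"
begin

definition rk :: "'a \<Rightarrow> nat" where "rk x = card {y\<in>X. R y x}"

definition seg :: "nat \<Rightarrow> 'a set" where "seg s = {x\<in>X. rk x < s}"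

definition dclosed :: "'a set \<Rightarrow> bool" where
  "dclosed S \<longleftrightarrow> S \<subseteq> X \<and> (\<forall>x y. y \<in> S \<longrightarrow> x \<in> X \<longrightarrow> R x y \<longrightarrow> x \<in> S)"

lemma rk_mono: assumes "R x y" "x \<in> X" shows "rk x < rk y"
proof -
  have sub: "{z\<in>X. R z x} \<subseteq> {z\<in>X. R z y}" using assms trn by blast
  have "x \<notin> {z\<in>X. R z x}" using irr by simp
  moreover have "x \<in> {z\<in>X. R z y}" using assms by simp
  ultimately have "{z\<in>X. R z x} \<subset> {z\<in>X. R z y}" using sub by blast
  then show ?thesis unfolding rk_def by (rule psubset_card_mono[rotated]) (use finX in auto)
qed

lemma rk_inj: "inj_on rk X"
proof (rule inj_onI)
  fix x y assume "x \<in> X" "y \<in> X" "rk x = rk y"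
  show "x = y"
  proof (rule ccontr)
    assume "x \<noteq> y"
    then have "R x y \<or> R y x" using tot \<open>x \<in> X\<close> \<open>y \<in> X\<close> by blast
    then show False using rk_mono[of x y] rk_mono[of y x] \<open>x \<in> X\<close> \<open>y \<in> X\<close> \<open>rk x = rk y\<close> by linarith
  qed
qed

lemma rk_less: "x \<in> X \<Longrightarrow> rk x < card X"
proof -
  assume "x \<in> X"
  then have "{y\<in>X. R y x} \<subset> X" using irr by blast
  then show ?thesis unfolding rk_def using finX by (simp add: psubset_card_mono)
qed

lemma rk_image: "rk ` X = {..<card X}"
proof -
  have sub: "rk ` X \<subseteq> {..<card X}" using rk_less by blast
  have ce: "card (rk ` X) = card {..<card X}"
    using card_image[OF rk_inj] by simp
  show ?thesis by (rule card_subset_eq[OF finite_lessThan sub ce])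
qed

lemma card_seg: "card (seg s) = min s (card X)"
proof -
  have "rk ` seg s = rk ` X \<inter> {..<s}" unfolding seg_def by blast
  then have e1: "rk ` seg s = {..<min s (card X)}" unfolding rk_image by (auto simp: lessThan_Int_lessThan min.commute)
  have "inj_on rk (seg s)" using rk_inj unfolding seg_def by (rule inj_on_subset) auto
  then have e2: "card (seg s) = card (rk ` seg s)" by (rule card_image[symmetric])
  have e3: "card (rk ` seg s) = min s (card X)" unfolding e1 by simp
  show ?thesis using e2 e3 by linarith
qed

lemma seg_sub: "seg s \<subseteq> X" unfolding seg_def by auto

lemma finite_seg: "finite (seg s)" using seg_sub finX finite_subset by blast

lemma dclosed_seg: "dclosed (seg s)"
  unfolding dclosed_def seg_def using rk_mono less_trans by blast

lemma dclosed_eq_seg: assumes "dclosed S" shows "S = seg (card S)"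
proof -
  have SX: "S \<subseteq> X" using assms dclosed_def by auto
  have finS: "finite S" using SX finX finite_subset by blast
  have "S \<subseteq> seg (card S)"
  proof
    fix x assume xS: "x \<in> S"
    have "{y\<in>X. R y x} \<subseteq> S - {x}" using assms xS irr unfolding dclosed_def by auto
    then have "rk x \<le> card (S - {x})" unfolding rk_def using finS by (simp add: card_mono)
    also have "\<dots> < card S" by (rule card_Diff1_less[OF finS xS])
    finally show "x \<in> seg (card S)" using xS SX unfolding seg_def by blast
  qed
  moreover have "card (seg (card S)) = card S" using card_seg[of "card S"] card_mono[OF finX SX] by simp
  ultimately show ?thesis using card_subset_eq[OF finite_seg] by metis
qed

lemma seg_mono: "s \<le> t \<Longrightarrow> seg s \<subseteq> seg t" unfolding seg_def by auto

lemma seg_Un: "seg s \<union> seg t = seg (max s t)"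
  unfolding seg_def by auto

lemma card_dclosed_Un:
  assumes "dclosed A" "dclosed B"
  shows "card (A \<union> B) = max (card A) (card B)"
proof -
  have eqA: "A = seg (card A)" and eqB: "B = seg (card B)"
    using dclosed_eq_seg[OF assms(1)] dclosed_eq_seg[OF assms(2)] by blast+
  have "A \<union> B = seg (max (card A) (card B))"
    apply (subst (1) eqA, subst (1) eqB) by (rule seg_Un)
  moreover have "card A \<le> card X" "card B \<le> card X"
    using assms unfolding dclosed_def by (auto intro: card_mono finX)
  ultimately show ?thesis using card_seg by simp
qed

lemma sum_dclosed_le:
  fixes f :: "'a \<Rightarrow> nat"
  assumes B: "B \<subseteq> Y" "\<forall>x y. y \<in> B \<longrightarrow> x \<in> Y \<longrightarrow> R x y \<longrightarrow> x \<in> B"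
    and A: "A \<subseteq> Y" and Y: "Y \<subseteq> X" and cd: "card A = card B"
    and mono: "\<And>x y. x \<in> X \<Longrightarrow> y \<in> X \<Longrightarrow> R x y \<Longrightarrow> f x < f y"
  shows "sum f B \<le> sum f A \<and> (A \<noteq> B \<longrightarrow> sum f B < sum f A)"
proof -
  have finY: "finite Y" using Y finX finite_subset by blast
  have finA: "finite A" and finB: "finite B" using A B finY finite_subset by blast+
  have lt: "\<And>b a. b \<in> B - A \<Longrightarrow> a \<in> A - B \<Longrightarrow> f b < f a"
  proof -
    fix b a assume b: "b \<in> B - A" and a: "a \<in> A - B"
    have "a \<noteq> b" using a b by auto
    moreover have "\<not> R a b" using B a b A by blast
    ultimately have "R b a" using tot[of a b] a b A B Y by blast
    then show "f b < f a" using mono a b A B Y by blast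
  qed
  have cd2: "card (B - A) = card (A - B)"
    using cd finA finB by (metis Int_commute card_Diff_subset_Int finite_Int)
  have key: "sum f (B - A) \<le> sum f (A - B) \<and> (B - A \<noteq> {} \<longrightarrow> sum f (B - A) < sum f (A - B))"
  proof (cases "B - A = {}")
    case True
    then have "card (A - B) = 0" using cd2 by (metis card.empty)
    then have "A - B = {}" using finA by simp
    then show ?thesis using True by simp
  next
    case False
    then have ne2: "A - B \<noteq> {}" using cd2 finB by (metis card_0_eq card.empty finite_Diff)
    define M where "M = Max (f ` (B - A))"
    have fin1: "finite (B - A)" "finite (A - B)" using finA finB by auto
    have M1: "\<forall>b\<in>B - A. f b \<le> M" unfolding M_def using fin1 by auto
    obtain b0 where b0: "b0 \<in> B - A" "f b0 = M" unfolding M_def using False fin1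
      by (metis (mono_tags, lifting) Max_in finite_imageI image_iff image_is_empty)
    have M2: "\<forall>a\<in>A - B. M < f a" using lt b0 by auto
    have "sum f (B - A) \<le> sum (\<lambda>_. M) (B - A)" using M1 by (intro sum_mono) auto
    also have "\<dots> = card (A - B) * M" using cd2 by simp
    also have "\<dots> < sum f (A - B)"
    proof -
      have "sum (\<lambda>_. M) (A - B) < sum f (A - B)" using M2 ne2 fin1
        by (intro sum_strict_mono) auto
      then show ?thesis by simp
    qed
    finally show ?thesis using False by simp
  qed
  have "sum f B = sum f (B - A) + sum f (A \<inter> B)" using finB
    by (metis Int_commute sum.Int_Diff add.commute)
  moreover have "sum f A = sum f (A - B) + sum f (A \<inter> B)" using finA
    by (metis sum.Int_Diff add.commute)
  moreover have "B - A \<noteq> {}" if "A \<noteq> B"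
  proof
    assume "B - A = {}"
    then have "B \<subseteq> A" by auto
    then have "B = A" using card_subset_eq[OF finA] cd by metis
    then show False using that by simp
  qed
  ultimately show ?thesis using key by auto
qed

end

section \<open>Monomials as lists; reverse-lexicographic order\<close>

fun rl :: "nat list \<Rightarrow> nat list \<Rightarrow> bool" where
  "rl (x#xs) (y#ys) = (rl xs ys \<or> (xs = ys \<and> y < x))"
| "rl _ _ = False"

lemma rl_len: "rl xs ys \<Longrightarrow> length xs = length ys"
  by (induction xs ys rule: rl.induct) auto

lemma rl_irr: "\<not> rl xs xs"
  by (induction xs) auto

lemma rl_trans: "rl xs ys \<Longrightarrow> rl ys zs \<Longrightarrow> rl xs zs"
proof (induction xs arbitrary: ys zs)
  case Nil then show ?case by simp
next
  case (Cons x xs)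
  then obtain y ys' where ys: "ys = y # ys'" by (cases ys) auto
  then obtain z zs' where zs: "zs = z # zs'" using Cons by (cases zs) auto
  show ?case using Cons ys zs by auto
qed

lemma rl_tot: "length xs = length ys \<Longrightarrow> xs \<noteq> ys \<Longrightarrow> rl xs ys \<or> rl ys xs"
proof (induction xs arbitrary: ys)
  case Nil then show ?case by simp
next
  case (Cons x xs)
  then obtain y ys' where ys: "ys = y # ys'" by (cases ys) auto
  show ?case
  proof (cases "xs = ys'")
    case True then show ?thesis using Cons ys by auto
  next
    case False then show ?thesis using Cons ys by auto
  qed
qed

definition Mon :: "nat \<Rightarrow> nat \<Rightarrow> nat list set" where
  "Mon n T = {xs. length xs = n \<and> sum_list xs = T}"

lemma finite_Mon: "finite (Mon n T)"
proof -
  have sub: "Mon n T \<subseteq> {xs. set xs \<subseteq> {..T} \<and> length xs = n}"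
  proof
    fix xs assume "xs \<in> Mon n T"
    then have "length xs = n" "sum_list xs = T" unfolding Mon_def by auto
    then show "xs \<in> {xs. set xs \<subseteq> {..T} \<and> length xs = n}"
      using member_le_sum_list[of _ xs] by auto
  qed
  have fin: "finite {xs. set xs \<subseteq> {..T} \<and> length xs = (n::nat)}"
    by (rule finite_lists_length_eq) simp
  show ?thesis by (rule finite_subset[OF sub fin])
qed

lemma sto_Mon: "sto (Mon n T) rl"
proof
  show "finite (Mon n T)" by (rule finite_Mon)
qed (auto simp: rl_irr Mon_def intro: rl_trans dest: rl_tot)

definition L :: "nat \<Rightarrow> nat \<Rightarrow> nat \<Rightarrow> nat list set" where
  "L n T s = sto.seg (Mon n T) rl s"

definition rkM :: "nat \<Rightarrow> nat \<Rightarrow> nat list \<Rightarrow> nat" where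
  "rkM n T = sto.rk (Mon n T) rl"

abbreviation dcl :: "nat \<Rightarrow> nat \<Rightarrow> nat list set \<Rightarrow> bool" where
  "dcl n T S \<equiv> sto.dclosed (Mon n T) rl S"

lemma L_sub: "L n T s \<subseteq> Mon n T"
  unfolding L_def using sto.seg_sub[OF sto_Mon] .

lemma card_L: "card (L n T s) = min s (card (Mon n T))"
  unfolding L_def using sto.card_seg[OF sto_Mon] .

lemma dcl_L: "dcl n T (L n T s)"
  unfolding L_def using sto.dclosed_seg[OF sto_Mon] .

lemma dcl_eq_L: "dcl n T S \<Longrightarrow> S = L n T (card S)"
  unfolding L_def using sto.dclosed_eq_seg[OF sto_Mon] .

lemma dcl_def2: "dcl n T S \<longleftrightarrow> S \<subseteq> Mon n T \<and> (\<forall>x y. y \<in> S \<longrightarrow> x \<in> Mon n T \<longrightarrow> rl x y \<longrightarrow> x \<in> S)"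
  using sto.dclosed_def[OF sto_Mon] .

lemma card_dcl_Un: "dcl n T A \<Longrightarrow> dcl n T B \<Longrightarrow> card (A \<union> B) = max (card A) (card B)"
  using sto.card_dclosed_Un[OF sto_Mon] .

lemma L_mem: "x \<in> L n T s \<Longrightarrow> y \<in> Mon n T \<Longrightarrow> rl y x \<Longrightarrow> y \<in> L n T s"
  using dcl_L unfolding dcl_def2 by blast

fun del :: "nat \<Rightarrow> nat list \<Rightarrow> nat list" where
  "del _ [] = []"
| "del 0 (x#xs) = xs"
| "del (Suc k) (x#xs) = x # del k xs"

fun ins :: "nat \<Rightarrow> nat \<Rightarrow> nat list \<Rightarrow> nat list" where
  "ins 0 c xs = c # xs"
| "ins (Suc k) c [] = [c]"
| "ins (Suc k) c (x#xs) = x # ins k c xs"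

lemma length_del: "k < length xs \<Longrightarrow> length (del k xs) = length xs - 1"
  by (induction k xs rule: del.induct) auto

lemma length_ins: "k \<le> length xs \<Longrightarrow> length (ins k c xs) = Suc (length xs)"
  by (induction k c xs rule: ins.induct) auto

lemma sum_del: "k < length xs \<Longrightarrow> sum_list (del k xs) + xs ! k = sum_list xs"
  by (induction k xs rule: del.induct) auto

lemma sum_ins: "sum_list (ins k c xs) = c + sum_list xs"
  by (induction k c xs rule: ins.induct) auto

lemma nth_ins: "k \<le> length xs \<Longrightarrow> ins k c xs ! k = c"
  by (induction k c xs rule: ins.induct) auto

lemma del_ins: "k \<le> length xs \<Longrightarrow> del k (ins k c xs) = xs"
  by (induction k c xs rule: ins.induct) auto

lemma ins_del: "k < length xs \<Longrightarrow> ins k (xs ! k) (del k xs) = xs"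
  by (induction k xs rule: del.induct) auto

lemma ins_inj: "k \<le> length xs \<Longrightarrow> k \<le> length ys \<Longrightarrow> ins k c xs = ins k c ys \<Longrightarrow> xs = ys"
  by (metis del_ins)

lemma rl_ins: "length xs = length ys \<Longrightarrow> k \<le> length xs \<Longrightarrow>
    rl (ins k c xs) (ins k c ys) \<longleftrightarrow> rl xs ys"
proof (induction k arbitrary: xs ys)
  case 0 then show ?case by (auto simp: rl_irr)
next
  case (Suc k)
  then obtain x xs' y ys' where "xs = x # xs'" "ys = y # ys'"
    by (cases xs; cases ys) auto
  then show ?case using Suc ins_inj[of k xs' ys' c] by auto
qed

lemma rl_del: "length xs = length ys \<Longrightarrow> k < length xs \<Longrightarrow> xs ! k = ys ! k \<Longrightarrow>
    rl xs ys \<longleftrightarrow> rl (del k xs) (del k ys)"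
  using rl_ins[of "del k xs" "del k ys" k "xs ! k"] ins_del[of k xs] ins_del[of k ys]
  by (simp add: length_del)

lemma ins_Mon: "x \<in> Mon n T' \<Longrightarrow> k \<le> n \<Longrightarrow> ins k c x \<in> Mon (Suc n) (T' + c)"
  unfolding Mon_def by (simp add: length_ins sum_ins)

lemma del_Mon: "x \<in> Mon (Suc n) T \<Longrightarrow> k \<le> n \<Longrightarrow> del k x \<in> Mon n (T - x ! k)"
  unfolding Mon_def using sum_del[of k x] length_del[of k x] by auto

lemma nth_le_sum: "k < length (xs::nat list) \<Longrightarrow> xs ! k \<le> sum_list xs"
  using member_le_sum_list[of "xs ! k" xs] by simp

section \<open>Upper shadow\<close>

definition up :: "nat list set \<Rightarrow> nat list set" where
  "up F = {xs[i := Suc (xs ! i)] | xs i. xs \<in> F \<and> i < length xs}"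

lemma sum_upd: "i < length xs \<Longrightarrow> sum_list (xs[i := Suc (xs ! i)]) = Suc (sum_list (xs::nat list))"
proof (induction xs arbitrary: i)
  case Nil then show ?case by simp
next
  case (Cons x xs) then show ?case by (cases i) auto
qed

lemma up_Mon: "F \<subseteq> Mon n T \<Longrightarrow> up F \<subseteq> Mon n (Suc T)"
  unfolding up_def Mon_def using sum_upd by fastforce

lemma finite_up: assumes "finite F" shows "finite (up F)"
proof -
  have "up F \<subseteq> (\<lambda>(xs, i). xs[i := Suc (xs ! i)]) ` (F \<times> {..<Max (insert 0 (length ` F))})"
  proof
    fix m assume "m \<in> up F"
    then obtain xs i where m: "m = xs[i := Suc (xs ! i)]" "xs \<in> F" "i < length xs"
      unfolding up_def by blast
    have "length xs \<le> Max (insert 0 (length ` F))" using m assms by (intro Max_ge) auto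
    then show "m \<in> (\<lambda>(xs, i). xs[i := Suc (xs ! i)]) ` (F \<times> {..<Max (insert 0 (length ` F))})"
      using m by (intro image_eqI[of _ _ "(xs, i)"]) auto
  qed
  then show ?thesis using assms by (meson finite_SigmaI finite_imageI finite_lessThan finite_subset)
qed

lemma up_mono: "F \<subseteq> G \<Longrightarrow> up F \<subseteq> up G"
  unfolding up_def by blast

lemma up_Un: "up (F \<union> G) = up F \<union> up G"
  unfolding up_def by blast

lemma up_empty[simp]: "up {} = {}"
  unfolding up_def by blast

fun dfn :: "nat list \<Rightarrow> nat list" where
  "dfn [] = []"
| "dfn (0 # xs) = 0 # dfn xs"
| "dfn (Suc x # xs) = x # xs"

lemma length_dfn[simp]: "length (dfn xs) = length xs"
  by (induction xs rule: dfn.induct) auto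

lemma sum_dfn: "sum_list (dfn xs) = sum_list xs - 1"
  by (induction xs rule: dfn.induct) auto

lemma up_dfn: "0 < sum_list xs \<Longrightarrow> \<exists>i<length xs. xs = (dfn xs)[i := Suc (dfn xs ! i)]"
proof (induction xs rule: dfn.induct)
  case 1 then show ?case by simp
next
  case (2 xs)
  then obtain i where "i < length xs" "xs = (dfn xs)[i := Suc (dfn xs ! i)]" by auto
  then show ?case by (intro exI[of _ "Suc i"]) auto
next
  case (3 x xs) then show ?case by (intro exI[of _ 0]) auto
qed

lemma rl_upd: "i < length xs \<Longrightarrow> rl (xs[i := Suc (xs ! i)]) xs"
proof (induction xs arbitrary: i)
  case Nil then show ?case by simp
next
  case (Cons x xs) then show ?case by (cases i) auto
qed

lemma rl_dfn: "0 < sum_list xs \<Longrightarrow> rl xs (dfn xs)"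
  using up_dfn[of xs] rl_upd by (metis length_dfn)

lemma dfn_le_upd: "i < length l \<Longrightarrow> dfn (l[i := Suc (l ! i)]) = l \<or> rl (dfn (l[i := Suc (l ! i)])) l"
proof (induction l arbitrary: i)
  case Nil then show ?case by simp
next
  case (Cons x l)
  show ?case
  proof (cases i)
    case 0 then show ?thesis by simp
  next
    case (Suc i')
    then have i': "i' < length l" using Cons by simp
    show ?thesis
    proof (cases x)
      case 0 then show ?thesis using Cons.IH[OF i'] Suc by auto
    next
      case (Suc x')
      then show ?thesis using rl_upd[OF i'] \<open>i = Suc i'\<close> by auto
    qed
  qed
qed

lemma dfn_rl_aux: "rl u v \<Longrightarrow> sum_list v < sum_list u \<Longrightarrow> rl (dfn u) v \<or> dfn u = v"
proof (induction u arbitrary: v)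
  case Nil then show ?case by simp
next
  case (Cons a us)
  then obtain c vs where v: "v = c # vs" by (cases v) auto
  have h: "rl us vs \<or> (us = vs \<and> c < a)" using Cons.prems v by simp
  show ?case
  proof (cases a)
    case (Suc a')
    then show ?thesis using h v by (cases "a' = c") auto
  next
    case 0
    then have us_vs: "rl us vs" using h by simp
    have "sum_list vs < sum_list us" using Cons.prems v 0 by simp
    then have "rl (dfn us) vs \<or> dfn us = vs" using Cons.IH us_vs by blast
    moreover have "dfn us = vs \<Longrightarrow> c = 0"
      using Cons.prems v 0 sum_dfn[of us] by simp
    ultimately show ?thesis using 0 v by auto
  qed
qed

lemma dfn_rl: "rl m' m \<Longrightarrow> sum_list m' = sum_list m \<Longrightarrow> 0 < sum_list m \<Longrightarrow>
   dfn m' = dfn m \<or> rl (dfn m') (dfn m)"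
proof (induction m' arbitrary: m)
  case Nil then show ?case by simp
next
  case (Cons a xs')
  then obtain b xs where m: "m = b # xs" by (cases m) auto
  have h: "rl xs' xs \<or> (xs' = xs \<and> b < a)" using Cons.prems m by simp
  show ?case
  proof (cases a)
    case (Suc a')
    show ?thesis
    proof (cases b)
      case (Suc b') then show ?thesis using h m \<open>a = Suc a'\<close> by auto
    next
      case 0
      then have "0 < sum_list xs" using Cons.prems m by simp
      then have "rl xs (dfn xs)" by (rule rl_dfn)
      then have "rl xs' (dfn xs)" using h rl_trans by blast
      then show ?thesis using m 0 \<open>a = Suc a'\<close> by auto
    qed
  next
    case 0
    then have xs'xs: "rl xs' xs" using h by simp
    show ?thesis
    proof (cases b)
      case 0
      then have "dfn xs' = dfn xs \<or> rl (dfn xs') (dfn xs)"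
        using Cons.IH[OF xs'xs] Cons.prems m \<open>a = 0\<close> by simp
      then show ?thesis using m 0 \<open>a = 0\<close> by auto
    next
      case (Suc b')
      have "sum_list xs < sum_list xs'" using Cons.prems m \<open>a = 0\<close> Suc by simp
      then have "rl (dfn xs') xs \<or> dfn xs' = xs" using dfn_rl_aux xs'xs by blast
      moreover have "dfn xs' = xs \<Longrightarrow> b' = 0"
        using Cons.prems m \<open>a = 0\<close> Suc sum_dfn[of xs'] by simp
      ultimately show ?thesis using m Suc \<open>a = 0\<close> by auto
    qed
  qed
qed

lemma dcl_up_L: "dcl n (Suc T) (up (L n T s))"
  unfolding dcl_def2
proof (intro conjI allI impI)
  show "up (L n T s) \<subseteq> Mon n (Suc T)" using up_Mon L_sub by blast
next
  fix m' m assume m: "m \<in> up (L n T s)" and m': "m' \<in> Mon n (Suc T)" and r: "rl m' m"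
  obtain l i where l: "m = l[i := Suc (l ! i)]" "l \<in> L n T s" "i < length l"
    using m unfolding up_def by blast
  have mM: "m \<in> Mon n (Suc T)" using m up_Mon L_sub by blast
  have s1: "sum_list m' = sum_list m" "0 < sum_list m" using m' mM unfolding Mon_def by auto
  have "dfn m' = dfn m \<or> rl (dfn m') (dfn m)" using dfn_rl[OF r s1] .
  moreover have "dfn m = l \<or> rl (dfn m) l" using dfn_le_upd[OF l(3)] l(1) by simp
  ultimately have "dfn m' = l \<or> rl (dfn m') l" using rl_trans by metis
  moreover have dM: "dfn m' \<in> Mon n T" using m' unfolding Mon_def by (simp add: sum_dfn)
  ultimately have dL: "dfn m' \<in> L n T s" using l(2) L_mem by blast
  obtain j where "j < length m'" "m' = (dfn m')[j := Suc (dfn m' ! j)]"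
    using up_dfn[of m'] s1 by auto
  then show "m' \<in> up (L n T s)" unfolding up_def using dL by (metis (mono_tags, lifting) length_dfn mem_Collect_eq)
qed

definition sl :: "nat \<Rightarrow> nat \<Rightarrow> nat list set \<Rightarrow> nat list set" where
  "sl k c F = del k ` {x\<in>F. x ! k = c}"

lemma del_upd_lt: "i < k \<Longrightarrow> k < length xs \<Longrightarrow> del k (xs[i := v]) = (del k xs)[i := v]"
proof (induction k xs arbitrary: i rule: del.induct)
  case (3 k x xs) then show ?case by (cases i) auto
qed auto

lemma del_upd_gt: "k < i \<Longrightarrow> i < length xs \<Longrightarrow> del k (xs[i := v]) = (del k xs)[i - 1 := v]"
proof (induction k xs arbitrary: i rule: del.induct)
  case (2 x xs) then show ?case by (cases i) auto
next
  case (3 k x xs)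
  then obtain i' where "i = Suc i'" by (cases i) auto
  then show ?case using 3 by (cases i') auto
qed auto

lemma del_upd_eq: "del k (xs[k := v]) = del k xs"
  by (induction k xs rule: del.induct) auto

lemma nth_del_lt: "i < k \<Longrightarrow> k < length xs \<Longrightarrow> del k xs ! i = xs ! i"
proof (induction k xs arbitrary: i rule: del.induct)
  case (3 k x xs) then show ?case by (cases i) auto
qed auto

lemma nth_del_gt: "k < i \<Longrightarrow> i < length xs \<Longrightarrow> del k xs ! (i - 1) = xs ! i"
proof (induction k xs arbitrary: i rule: del.induct)
  case (2 x xs) then show ?case by (cases i) auto
next
  case (3 k x xs)
  then obtain i' where "i = Suc i'" by (cases i) auto
  then show ?case using 3 3(1)[of i'] by (cases i') auto
qed auto

lemma sl_Mon: "F \<subseteq> Mon (Suc n) T \<Longrightarrow> k \<le> n \<Longrightarrow> sl k c F \<subseteq> Mon n (T - c)"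
proof
  fix y assume F: "F \<subseteq> Mon (Suc n) T" "k \<le> n" and "y \<in> sl k c F"
  then obtain x where x: "x \<in> F" "x ! k = c" "y = del k x" unfolding sl_def by blast
  then have "x \<in> Mon (Suc n) T" using F by blast
  then have "del k x \<in> Mon n (T - x ! k)" using del_Mon F(2) by blast
  then show "y \<in> Mon n (T - c)" using x by simp
qed

lemma sl_inj: "F \<subseteq> Mon (Suc n) T \<Longrightarrow> k \<le> n \<Longrightarrow> inj_on (del k) {x\<in>F. x ! k = c}"
proof (rule inj_onI)
  fix x y assume F: "F \<subseteq> Mon (Suc n) T" "k \<le> n" and x: "x \<in> {x\<in>F. x ! k = c}"
    and y: "y \<in> {x\<in>F. x ! k = c}" and e: "del k x = del k y"
  have "length x = Suc n" "length y = Suc n" using x y F unfolding Mon_def by auto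
  then have "ins k (x ! k) (del k x) = x" "ins k (y ! k) (del k y) = y"
    using ins_del[of k x] ins_del[of k y] F(2) by auto
  moreover have "x ! k = y ! k" using x y by simp
  ultimately show "x = y" using e by metis
qed

lemma card_sl: "F \<subseteq> Mon (Suc n) T \<Longrightarrow> k \<le> n \<Longrightarrow> card (sl k c F) = card {x\<in>F. x ! k = c}"
  unfolding sl_def using sl_inj card_image by blast

lemma ins_sl: "F \<subseteq> Mon (Suc n) T \<Longrightarrow> k \<le> n \<Longrightarrow> y \<in> sl k c F \<Longrightarrow> ins k c y \<in> F"
proof -
  assume F: "F \<subseteq> Mon (Suc n) T" "k \<le> n" and "y \<in> sl k c F"
  then obtain x where x: "x \<in> F" "x ! k = c" "y = del k x" unfolding sl_def by blast
  then have "length x = Suc n" using F unfolding Mon_def by auto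
  then have "ins k (x ! k) (del k x) = x" using ins_del[of k x] F(2) by simp
  then show ?thesis using x by simp
qed

lemma mem_sl: "x \<in> F \<Longrightarrow> del k x \<in> sl k (x ! k) F"
  unfolding sl_def by blast

lemma card_decomp:
  assumes F: "F \<subseteq> Mon (Suc n) T" "k \<le> n" and N: "T \<le> N"
  shows "card F = (\<Sum>c\<le>N. card (sl k c F))"
proof -
  have finF: "finite F" using F finite_Mon finite_subset by blast
  have "F = (\<Union>c\<le>N. {x\<in>F. x ! k = c})"
  proof -
    have "x ! k \<le> N" if "x \<in> F" for x
    proof -
      have "x ! k \<le> sum_list x" using that F nth_le_sum[of k x] unfolding Mon_def by auto
      then show ?thesis using that F N unfolding Mon_def by auto
    qed
    then show ?thesis by auto
  qed
  then have "card F = card (\<Union>c\<le>N. {x\<in>F. x ! k = c})" by simp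
  also have "\<dots> = (\<Sum>c\<le>N. card {x\<in>F. x ! k = c})"
    by (rule card_UN_disjoint) (use finF in auto)
  also have "\<dots> = (\<Sum>c\<le>N. card (sl k c F))"
    using card_sl[OF F] by simp
  finally show ?thesis .
qed

lemma sl_up:
  assumes F: "F \<subseteq> Mon (Suc n) T" and k: "k \<le> n"
  shows "sl k c (up F) = up (sl k c F) \<union> (if c = 0 then {} else sl k (c - 1) F)"
proof
  show "sl k c (up F) \<subseteq> up (sl k c F) \<union> (if c = 0 then {} else sl k (c - 1) F)"
  proof
    fix y assume "y \<in> sl k c (up F)"
    then obtain m where m: "m \<in> up F" "m ! k = c" "y = del k m" unfolding sl_def by blast
    then obtain x i where x: "m = x[i := Suc (x ! i)]" "x \<in> F" "i < length x"
      unfolding up_def by blast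
    have lx: "length x = Suc n" using x F unfolding Mon_def by auto
    have kx: "k < length x" using lx k by simp
    consider "i = k" | "i < k" | "k < i" by linarith
    then show "y \<in> up (sl k c F) \<union> (if c = 0 then {} else sl k (c - 1) F)"
    proof cases
      case 1
      then have "c = Suc (x ! k)" using m x kx by simp
      moreover have "y = del k x" using m x 1 del_upd_eq by simp
      ultimately show ?thesis using x(2) unfolding sl_def by auto
    next
      case 2
      have xk: "x ! k = c" using m x 2 by simp
      have "y = (del k x)[i := Suc (del k x ! i)]"
        using m x 2 kx del_upd_lt nth_del_lt by simp
      moreover have "i < length (del k x)" using 2 kx length_del[of k x] by simp
      moreover have "del k x \<in> sl k c F" using x xk unfolding sl_def by blast
      ultimately show ?thesis unfolding up_def by blast
    next
      case 3
      have xk: "x ! k = c" using m x 3 by simp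
      have "y = (del k x)[i - 1 := Suc (del k x ! (i - 1))]"
        using m x 3 del_upd_gt nth_del_gt by simp
      moreover have "i - 1 < length (del k x)" using 3 x(3) length_del[of k x] kx by simp
      moreover have "del k x \<in> sl k c F" using x xk unfolding sl_def by blast
      ultimately show ?thesis unfolding up_def by blast
    qed
  qed
next
  show "up (sl k c F) \<union> (if c = 0 then {} else sl k (c - 1) F) \<subseteq> sl k c (up F)"
  proof
    fix y assume y: "y \<in> up (sl k c F) \<union> (if c = 0 then {} else sl k (c - 1) F)"
    show "y \<in> sl k c (up F)"
    proof (cases "y \<in> up (sl k c F)")
      case True
      then obtain w j where w: "y = w[j := Suc (w ! j)]" "w \<in> sl k c F" "j < length w"
        unfolding up_def by blast
      then obtain x where x: "x \<in> F" "x ! k = c" "w = del k x" unfolding sl_def by blast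
      have lx: "length x = Suc n" using x F unfolding Mon_def by auto
      have kx: "k < length x" using lx k by simp
      have lw: "length w = n" using x lx length_del[of k x] kx by simp
      show ?thesis
      proof (cases "j < k")
        case True
        define m where "m = x[j := Suc (x ! j)]"
        have "j < length x" using lx lw w(3) by simp
        then have "m \<in> up F" unfolding m_def up_def using x(1) by blast
        moreover have "m ! k = c" unfolding m_def using True x by simp
        moreover have "del k m = y" unfolding m_def using True kx w x del_upd_lt nth_del_lt by simp
        ultimately show ?thesis unfolding sl_def by blast
      next
        case False
        define m where "m = x[Suc j := Suc (x ! Suc j)]"
        have "Suc j < length x" using lx lw w(3) by simp
        then have "m \<in> up F" unfolding m_def up_def using x(1) by blast
        moreover have "m ! k = c" unfolding m_def using False x by simp
        moreover have "del k m = y" unfolding m_def using False kx w x del_upd_gt[of k "Suc j" x]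
            nth_del_gt[of k "Suc j" x] lx lw by simp
        ultimately show ?thesis unfolding sl_def by blast
      qed
    next
      case False
      then have c: "c \<noteq> 0" "y \<in> sl k (c - 1) F" using y by (auto split: if_splits)
      then obtain x where x: "x \<in> F" "x ! k = c - 1" "y = del k x" unfolding sl_def by blast
      have lx: "length x = Suc n" using x F unfolding Mon_def by auto
      have kx: "k < length x" using lx k by simp
      define m where "m = x[k := Suc (x ! k)]"
      have "m \<in> up F" unfolding m_def up_def using x(1) kx by blast
      moreover have "m ! k = c" unfolding m_def using x kx c by simp
      moreover have "del k m = y" unfolding m_def using x del_upd_eq by simp
      ultimately show ?thesis unfolding sl_def by blast
    qed
  qed
qed

section \<open>Compression along a coordinate\<close>

definition comp :: "nat \<Rightarrow> nat \<Rightarrow> nat \<Rightarrow> nat list set \<Rightarrow> nat list set" where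
  "comp n T k F = (\<Union>c\<le>T. ins k c ` L n (T - c) (card (sl k c F)))"

lemma comp_Mon: assumes k: "k \<le> n" shows "comp n T k F \<subseteq> Mon (Suc n) T"
proof
  fix y assume "y \<in> comp n T k F"
  then obtain c l where c: "c \<le> T" "l \<in> L n (T - c) (card (sl k c F))" "y = ins k c l"
    unfolding comp_def by blast
  have "l \<in> Mon n (T - c)" using c L_sub by blast
  then have "ins k c l \<in> Mon (Suc n) (T - c + c)" using ins_Mon k by blast
  then show "y \<in> Mon (Suc n) T" using c by simp
qed

lemma sl_comp: assumes k: "k \<le> n"
  shows "sl k c (comp n T k F) = (if c \<le> T then L n (T - c) (card (sl k c F)) else {})"
proof -
  have lenL: "length l = n" if "l \<in> L n T' s" for l T' s using that L_sub unfolding Mon_def by blast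
  have "{x \<in> comp n T k F. x ! k = c} = (if c \<le> T then ins k c ` L n (T - c) (card (sl k c F)) else {})"
  proof (intro set_eqI iffI)
    fix x assume "x \<in> {x \<in> comp n T k F. x ! k = c}"
    then obtain c' l where c': "c' \<le> T" "l \<in> L n (T - c') (card (sl k c' F))" "x = ins k c' l" "x ! k = c"
      unfolding comp_def by blast
    have "x ! k = c'" using c' nth_ins[of k l c'] lenL[OF c'(2)] k by simp
    then show "x \<in> (if c \<le> T then ins k c ` L n (T - c) (card (sl k c F)) else {})"
      using c' by auto
  next
    fix x assume x: "x \<in> (if c \<le> T then ins k c ` L n (T - c) (card (sl k c F)) else {})"
    then have cT: "c \<le> T" by (auto split: if_splits)
    then obtain l where l: "l \<in> L n (T - c) (card (sl k c F))" "x = ins k c l" using x by auto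
    have "x ! k = c" using l nth_ins[of k l c] lenL[OF l(1)] k by simp
    moreover have "x \<in> comp n T k F" unfolding comp_def using cT l by blast
    ultimately show "x \<in> {x \<in> comp n T k F. x ! k = c}" by blast
  qed
  moreover have "del k ` ins k c ` L n (T - c) s = L n (T - c) s" for s
  proof -
    have "del k ` ins k c ` L n (T - c) s = (\<lambda>l. del k (ins k c l)) ` L n (T - c) s" by (simp add: image_image)
    also have "\<dots> = (\<lambda>l. l) ` L n (T - c) s"
      by (rule image_cong) (use del_ins lenL k in auto)
    also have "\<dots> = L n (T - c) s" by simp
    finally show ?thesis .
  qed
  ultimately show ?thesis unfolding sl_def by auto
qed

lemma card_sl_le: "F \<subseteq> Mon (Suc n) T \<Longrightarrow> k \<le> n \<Longrightarrow> card (sl k c F) \<le> card (Mon n (T - c))"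
  using sl_Mon finite_Mon card_mono by metis

lemma card_comp: assumes F: "F \<subseteq> Mon (Suc n) T" and k: "k \<le> n"
  shows "card (comp n T k F) = card F"
proof -
  have "card (comp n T k F) = (\<Sum>c\<le>T. card (sl k c (comp n T k F)))"
    using card_decomp[OF comp_Mon[OF k] k order_refl] by simp
  also have "\<dots> = (\<Sum>c\<le>T. card (sl k c F))"
  proof (rule sum.cong)
    fix c assume "c \<in> {..T}"
    then show "card (sl k c (comp n T k F)) = card (sl k c F)"
      using sl_comp[OF k] card_L card_sl_le[OF F k] by (simp add: min_absorb1)
  qed simp
  also have "\<dots> = card F" using card_decomp[OF F k order_refl] by simp
  finally show ?thesis .
qed

definition Pn :: "nat \<Rightarrow> bool" where
  "Pn n \<longleftrightarrow> (\<forall>T G. G \<subseteq> Mon n T \<longrightarrow> card (up (L n T (card G))) \<le> card (up G))"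

lemma card_Un_ge: "finite A \<Longrightarrow> finite B \<Longrightarrow> max (card A) (card B) \<le> card (A \<union> B)"
  by (simp add: card_mono)

lemma card_up_decomp:
  assumes F: "F \<subseteq> Mon (Suc n) T" and k: "k \<le> n"
  shows "card (up F) = (\<Sum>c\<le>Suc T. card (up (sl k c F) \<union> (if c = 0 then {} else sl k (c - 1) F)))"
proof -
  have "card (up F) = (\<Sum>c\<le>Suc T. card (sl k c (up F)))"
    using card_decomp[OF up_Mon[OF F] k order_refl] by simp
  also have "\<dots> = (\<Sum>c\<le>Suc T. card (up (sl k c F) \<union> (if c = 0 then {} else sl k (c - 1) F)))"
    using sl_up[OF F k] by simp
  finally show ?thesis .
qed

lemma card_up_comp:
  assumes F: "F \<subseteq> Mon (Suc n) T" and k: "k \<le> n" and P: "Pn n"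
  shows "card (up (comp n T k F)) \<le> card (up F)"
proof -
  let ?G = "comp n T k F"
  let ?a = "\<lambda>c. card (sl k c F)"
  have G: "?G \<subseteq> Mon (Suc n) T" by (rule comp_Mon[OF k])
  have slG: "sl k c ?G = (if c \<le> T then L n (T - c) (?a c) else {})" for c using sl_comp[OF k] .
  have finsl: "finite (sl k c F)" for c using sl_Mon[OF F k] finite_Mon finite_subset by blast
  have cardL: "card (L n (T - c) (?a c)) = ?a c" for c
    using card_L card_sl_le[OF F k] by (simp add: min_absorb1)
  have trm: "card (up (sl k c ?G) \<union> (if c = 0 then {} else sl k (c - 1) ?G))
      \<le> card (up (sl k c F) \<union> (if c = 0 then {} else sl k (c - 1) F))" if c: "c \<le> Suc T" for c
  proof -
    have upP: "card (up (L n (T - c) (?a c))) \<le> card (up (sl k c F))"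
      using P sl_Mon[OF F k] unfolding Pn_def by blast
    have finR: "finite (up (sl k c F))" using finsl finite_up by blast
    show ?thesis
    proof (cases "c = 0")
      case True
      then show ?thesis using slG upP by simp
    next
      case False
      have fin2: "finite (sl k (c - 1) F)" by (rule finsl)
      show ?thesis
      proof (cases "c = Suc T")
        case True
        then have "up (sl k c ?G) \<union> (if c = 0 then {} else sl k (c - 1) ?G) = L n (T - T) (?a T)"
          using slG by simp
        then have "card (up (sl k c ?G) \<union> (if c = 0 then {} else sl k (c - 1) ?G)) = ?a T"
          using cardL[of T] by simp
        also have "\<dots> \<le> card (up (sl k c F) \<union> sl k (c - 1) F)"
          using card_Un_ge[OF finR fin2] True by simp
        finally show ?thesis using False by simp
      next
        case False2: False
        then have cT: "c \<le> T" using c by simp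
        have e1: "up (sl k c ?G) = up (L n (T - c) (?a c))" using slG cT by simp
        have c1: "c - 1 \<le> T" using cT by simp
        have "T - (c - 1) = Suc (T - c)" using cT False by simp
        then have e2: "sl k (c - 1) ?G = L n (Suc (T - c)) (?a (c - 1))"
          using slG[of "c - 1"] c1 by simp
        have d1: "dcl n (Suc (T - c)) (up (L n (T - c) (?a c)))" by (rule dcl_up_L)
        have d2: "dcl n (Suc (T - c)) (L n (Suc (T - c)) (?a (c - 1)))" by (rule dcl_L)
        have "card (up (sl k c ?G) \<union> sl k (c - 1) ?G)
            = max (card (up (L n (T - c) (?a c)))) (card (L n (Suc (T - c)) (?a (c - 1))))"
          unfolding e1 e2 by (rule card_dcl_Un[OF d1 d2])
        also have "\<dots> \<le> max (card (up (sl k c F))) (?a (c - 1))"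
          using upP cardL[of "c - 1"] cT False by (simp add: Suc_diff_le)
        also have "\<dots> \<le> card (up (sl k c F) \<union> sl k (c - 1) F)"
          using card_Un_ge[OF finR fin2] by simp
        finally show ?thesis using False by simp
      qed
    qed
  qed
  have "card (up ?G) = (\<Sum>c\<le>Suc T. card (up (sl k c ?G) \<union> (if c = 0 then {} else sl k (c - 1) ?G)))"
    by (rule card_up_decomp[OF G k])
  also have "\<dots> \<le> (\<Sum>c\<le>Suc T. card (up (sl k c F) \<union> (if c = 0 then {} else sl k (c - 1) F)))"
    by (rule sum_mono) (use trm in auto)
  also have "\<dots> = card (up F)" using card_up_decomp[OF F k] by simp
  finally show ?thesis .
qed

lemma sum_rep0[simp]: "sum_list (replicate r (0::nat)) = 0"
  by (induction r) auto

definition Phi :: "nat \<Rightarrow> nat \<Rightarrow> nat list set \<Rightarrow> nat" where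
  "Phi n T F = (\<Sum>x\<in>F. rkM n T x)"

lemma Mon_nth_le: "x \<in> Mon n T \<Longrightarrow> k < n \<Longrightarrow> x ! k \<le> T"
  unfolding Mon_def using nth_le_sum by auto

lemma sum_decomp:
  assumes G: "G \<subseteq> Mon (Suc n) T" and k: "k \<le> n"
  shows "sum f G = (\<Sum>c\<le>T. sum f {x\<in>G. x ! k = c})"
proof -
  have finG: "finite G" using G finite_Mon finite_subset by blast
  have "G = (\<Union>c\<le>T. {x\<in>G. x ! k = c})"
    using Mon_nth_le[of _ "Suc n" T k] G k by auto
  then have "sum f G = sum f (\<Union>c\<le>T. {x\<in>G. x ! k = c})" by simp
  also have "\<dots> = (\<Sum>c\<le>T. sum f {x\<in>G. x ! k = c})"
    by (rule sum.UNION_disjoint) (use finG in auto)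
  finally show ?thesis .
qed

lemma comp_part:
  assumes F: "F \<subseteq> Mon (Suc n) T" and k: "k \<le> n" and c: "c \<le> T"
  shows "{x\<in>comp n T k F. x ! k = c} = ins k c ` L n (T - c) (card (sl k c F))"
proof -
  have lenL: "length l = n" if "l \<in> L n T' s" for l T' s using that L_sub unfolding Mon_def by blast
  show ?thesis
  proof (intro set_eqI iffI)
    fix x assume "x \<in> {x\<in>comp n T k F. x ! k = c}"
    then obtain c' l where c': "c' \<le> T" "l \<in> L n (T - c') (card (sl k c' F))" "x = ins k c' l" "x ! k = c"
      unfolding comp_def by blast
    have "x ! k = c'" using c' nth_ins[of k l c'] lenL[OF c'(2)] k by simp
    then show "x \<in> ins k c ` L n (T - c) (card (sl k c F))" using c' by auto
  next
    fix x assume x: "x \<in> ins k c ` L n (T - c) (card (sl k c F))"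
    then obtain l where l: "l \<in> L n (T - c) (card (sl k c F))" "x = ins k c l" by auto
    have "x ! k = c" using l nth_ins[of k l c] lenL[OF l(1)] k by simp
    moreover have "x \<in> comp n T k F" unfolding comp_def using c l by blast
    ultimately show "x \<in> {x\<in>comp n T k F. x ! k = c}" by blast
  qed
qed

lemma Phi_comp:
  assumes F: "F \<subseteq> Mon (Suc n) T" and k: "k \<le> n"
  shows "Phi (Suc n) T (comp n T k F) \<le> Phi (Suc n) T F \<and>
    (comp n T k F \<noteq> F \<longrightarrow> Phi (Suc n) T (comp n T k F) < Phi (Suc n) T F)"
proof -
  let ?G = "comp n T k F"
  let ?f = "rkM (Suc n) T"
  have G: "?G \<subseteq> Mon (Suc n) T" by (rule comp_Mon[OF k])
  have part: "sum ?f {x\<in>?G. x ! k = c} \<le> sum ?f {x\<in>F. x ! k = c} \<and>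
      ({x\<in>F. x ! k = c} \<noteq> {x\<in>?G. x ! k = c} \<longrightarrow> sum ?f {x\<in>?G. x ! k = c} < sum ?f {x\<in>F. x ! k = c})"
    if c: "c \<le> T" for c
  proof -
    let ?Y = "{x \<in> Mon (Suc n) T. x ! k = c}"
    let ?B = "{x\<in>?G. x ! k = c}"
    let ?A = "{x\<in>F. x ! k = c}"
    have Beq: "?B = ins k c ` L n (T - c) (card (sl k c F))" by (rule comp_part[OF F k c])
    have BY: "?B \<subseteq> ?Y" using G by blast
    have AY: "?A \<subseteq> ?Y" using F by blast
    have dB: "\<forall>x y. y \<in> ?B \<longrightarrow> x \<in> ?Y \<longrightarrow> rl x y \<longrightarrow> x \<in> ?B"
    proof (intro allI impI)
      fix x y assume y: "y \<in> ?B" and x: "x \<in> ?Y" and r: "rl x y"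
      obtain l where l: "l \<in> L n (T - c) (card (sl k c F))" "y = ins k c l" using y Beq by auto
      have ly: "length y = Suc n" "length x = Suc n" using y x G unfolding Mon_def by auto
      have "del k y = l" using l del_ins[of k l c] L_sub k unfolding Mon_def by auto
      moreover have "rl (del k x) (del k y)" using rl_del[of x y k] ly x y r k by simp
      moreover have "del k x \<in> Mon n (T - c)" using del_Mon[of x n T k] x k by auto
      ultimately have "del k x \<in> L n (T - c) (card (sl k c F))" using l L_mem by blast
      moreover have "x = ins k c (del k x)" using ins_del[of k x] ly k x by simp
      ultimately show "x \<in> ?B" using Beq x by auto
    qed
    have cA: "card ?A = card (sl k c F)" using card_sl[OF F k] by simp
    have cB: "card ?B = card (sl k c ?G)" using card_sl[OF G k] by simp
    also have "\<dots> = card (L n (T - c) (card (sl k c F)))" using sl_comp[OF k] c by simp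
    also have "\<dots> = card (sl k c F)" using card_L card_sl_le[OF F k] by (simp add: min_absorb1)
    finally have cAB: "card ?A = card ?B" using cA by simp
    have mono: "\<And>x y. x \<in> Mon (Suc n) T \<Longrightarrow> y \<in> Mon (Suc n) T \<Longrightarrow> rl x y \<Longrightarrow> ?f x < ?f y"
      unfolding rkM_def using sto.rk_mono[OF sto_Mon] by blast
    have YX: "?Y \<subseteq> Mon (Suc n) T" by blast
    show ?thesis
      using sto.sum_dclosed_le[where f="rkM (Suc n) T", OF sto_Mon[of "Suc n" T] BY dB AY YX cAB mono] by blast
  qed
  have e1: "Phi (Suc n) T ?G = (\<Sum>c\<le>T. sum ?f {x\<in>?G. x ! k = c})"
    unfolding Phi_def by (rule sum_decomp[OF G k])
  have e2: "Phi (Suc n) T F = (\<Sum>c\<le>T. sum ?f {x\<in>F. x ! k = c})"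
    unfolding Phi_def by (rule sum_decomp[OF F k])
  have le: "Phi (Suc n) T ?G \<le> Phi (Suc n) T F"
    unfolding e1 e2 by (rule sum_mono) (use part in auto)
  moreover have "Phi (Suc n) T ?G < Phi (Suc n) T F" if ne: "?G \<noteq> F"
  proof -
    have "\<exists>c\<le>T. {x\<in>F. x ! k = c} \<noteq> {x\<in>?G. x ! k = c}"
    proof (rule ccontr)
      assume "\<not> ?thesis"
      then have h: "\<forall>c\<le>T. {x\<in>F. x ! k = c} = {x\<in>?G. x ! k = c}" by blast
      have "F = (\<Union>c\<le>T. {x\<in>F. x ! k = c})"
        using Mon_nth_le[of _ "Suc n" T k] F k by auto
      also have "\<dots> = (\<Union>c\<le>T. {x\<in>?G. x ! k = c})" using h by simp
      also have "\<dots> = ?G" using Mon_nth_le[of _ "Suc n" T k] G k by auto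
      finally show False using ne by simp
    qed
    then obtain c0 where c0: "c0 \<le> T" "{x\<in>F. x ! k = c0} \<noteq> {x\<in>?G. x ! k = c0}" by blast
    show ?thesis unfolding e1 e2
      by (rule sum_strict_mono_ex1) (use part c0 in auto)
  qed
  ultimately show ?thesis by blast
qed

lemma rl_append: "length u = length u' \<Longrightarrow> rl (u @ v) (u' @ v') \<longleftrightarrow> (rl v v' \<or> (v = v' \<and> rl u u'))"
proof (induction u arbitrary: u')
  case Nil then show ?case by (auto simp: rl_irr)
next
  case (Cons a us)
  then obtain b us' where u': "u' = b # us'" "length us = length us'" by (cases u') auto
  then show ?case using Cons.IH[OF u'(2)] by auto
qed

lemma rl_zeros: "u = replicate (length u) 0 \<or> rl u (replicate (length u) 0)"
proof (induction u)
  case Nil then show ?case by simp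
next
  case (Cons a us) then show ?case by (cases a) auto
qed

lemma sum_zero_rep: "sum_list (u::nat list) = 0 \<Longrightarrow> u = replicate (length u) 0"
  by (induction u) auto

lemma rl_last_zeros: "length u = Suc r \<Longrightarrow> sum_list u = a \<Longrightarrow>
   u = a # replicate r 0 \<or> rl u (a # replicate r 0)"
proof -
  assume l: "length u = Suc r" and s: "sum_list u = a"
  then obtain u0 us where u: "u = u0 # us" "length us = r" by (cases u) auto
  show ?thesis
  proof (cases "us = replicate r 0")
    case True then show ?thesis using u s by (simp add: sum_list_replicate)
  next
    case False
    then have "rl us (replicate r 0)" using rl_zeros[of us] u by auto
    then show ?thesis using u by simp
  qed
qed

lemma not_rl_first: "length u = Suc r \<Longrightarrow> sum_list u = Suc a \<Longrightarrow> \<not> rl u (replicate r 0 @ [Suc a])"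
proof
  assume l: "length u = Suc r" and s: "sum_list u = Suc a" and r: "rl u (replicate r 0 @ [Suc a])"
  obtain u1 ul where u: "u = u1 @ [ul]" using l by (metis length_Suc_conv_rev)
  have lu1: "length u1 = length (replicate r 0 :: nat list)" using u l by simp
  have "rl [ul] [Suc a] \<or> ([ul] = [Suc a] \<and> rl u1 (replicate r 0))"
    using r rl_append[OF lu1, of "[ul]" "[Suc a]"] u by simp
  moreover have "ul \<le> Suc a" using s u by simp
  ultimately have "ul = Suc a" "rl u1 (replicate r 0)" by auto
  moreover have "sum_list u1 = 0" using s u \<open>ul = Suc a\<close> by simp
  then have "u1 = replicate r 0" using sum_zero_rep[of u1] lu1 by simp
  ultimately show False using rl_irr by simp
qed

lemma first_nz: "0 < sum_list (x::nat list) \<Longrightarrow> \<exists>r a v. x = replicate r 0 @ Suc a # v"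
proof (induction x)
  case Nil then show ?case by simp
next
  case (Cons h x)
  show ?case
  proof (cases h)
    case 0
    then obtain r a v where "x = replicate r 0 @ Suc a # v" using Cons by auto
    then have "h # x = replicate (Suc r) 0 @ Suc a # v" using 0 by simp
    then show ?thesis by blast
  next
    case (Suc a)
    then have "h # x = replicate 0 0 @ Suc a # x" by simp
    then show ?thesis by blast
  qed
qed

lemma pred_lemma:
  assumes x: "x \<in> Mon N T" and y: "y \<in> Mon N T" and r: "rl y x" and N: "4 \<le> N"
  shows "\<exists>p\<in>Mon N T. rl p x \<and> (p = y \<or> rl y p) \<and> (\<exists>k<N. p ! k = x ! k)"
proof -
  have lx: "length x = N" "sum_list x = T" and ly: "length y = N" "sum_list y = T"
    using x y unfolding Mon_def by auto
  have T0: "0 < T"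
  proof (rule ccontr)
    assume "\<not> 0 < T"
    then have "x = replicate N 0" "y = replicate N 0" using sum_zero_rep[of x] sum_zero_rep[of y] lx ly by auto
    then show False using r rl_irr by simp
  qed
  obtain rr a v where xd: "x = replicate rr 0 @ Suc a # v" using first_nz lx T0 by blast
  show ?thesis
  proof (cases v)
    case Nil
    have "length (take (Suc rr) y) = Suc rr" using ly lx xd Nil by simp
    have "y = take (Suc rr) y" using ly lx xd Nil by simp
    then have "rl (take (Suc rr) y) (replicate rr 0 @ [Suc a])" using r xd Nil by simp
    moreover have "sum_list (take (Suc rr) y) = Suc a" using ly lx xd Nil \<open>y = take (Suc rr) y\<close> by simp
    ultimately show ?thesis using not_rl_first \<open>length (take (Suc rr) y) = Suc rr\<close> by blast
  next
    case (Cons b rest)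
    define p where "p = (a # replicate rr 0) @ (Suc b # rest)"
    have xd2: "x = (replicate rr 0 @ [Suc a]) @ (b # rest)" using xd Cons by simp
    have len1: "length (a # replicate rr 0) = length (replicate rr 0 @ [Suc a])" by simp
    have pM: "p \<in> Mon N T" using lx xd2 unfolding p_def Mon_def by simp
    have rpx: "rl p x" unfolding p_def xd2 using rl_append[OF len1] rl_irr by simp
    have share: "\<exists>k<N. p ! k = x ! k"
    proof (cases rest)
      case Nil
      then have "N = rr + 2" using lx xd2 by simp
      then have "2 \<le> rr" using N by simp
      then have "p ! 1 = 0" "x ! 1 = 0" unfolding p_def xd2 by (auto simp: nth_append)
      then show ?thesis using N by (intro exI[of _ 1]) auto
    next
      case (Cons e rest')
      have "p ! (rr + 2) = e" "x ! (rr + 2) = e" unfolding p_def xd2 Cons by (auto simp: nth_append)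
      moreover have "rr + 2 < N" using lx xd2 Cons by simp
      ultimately show ?thesis by (intro exI[of _ "rr + 2"]) simp
    qed
    define yu where "yu = take (Suc rr) y"
    define yv where "yv = drop (Suc rr) y"
    have ysp: "y = yu @ yv" unfolding yu_def yv_def by simp
    have lyu: "length yu = Suc rr" unfolding yu_def using ly lx xd2 by simp
    have lyv: "length yv = Suc (length rest)" unfolding yv_def using ly lx xd2 by simp
    have lenx1: "length yu = length (replicate rr 0 @ [Suc a])" using lyu by simp
    have hr: "rl yv (b # rest) \<or> (yv = b # rest \<and> rl yu (replicate rr 0 @ [Suc a]))"
      using r rl_append[OF lenx1] ysp xd2 by simp
    have sums: "sum_list yu + sum_list yv = Suc a + b + sum_list rest"
      using ly lx xd2 ysp by simp
    have hv: "rl yv (b # rest)"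
    proof (rule ccontr)
      assume "\<not> rl yv (b # rest)"
      then have "yv = b # rest" "rl yu (replicate rr 0 @ [Suc a])" using hr by auto
      moreover then have "sum_list yu = Suc a" using sums by simp
      ultimately show False using not_rl_first[OF lyu] by blast
    qed
    obtain c rest2 where yv: "yv = c # rest2" using lyv by (cases yv) auto
    have lenp1: "length yu = length (a # replicate rr 0)" using lyu by simp
    have goal: "rl yv (Suc b # rest) \<or> (yv = Suc b # rest \<and> (yu = a # replicate rr 0 \<or> rl yu (a # replicate rr 0)))"
    proof -
      have "rl rest2 rest \<or> (rest2 = rest \<and> b < c)" using hv yv by simp
      then consider "rl rest2 rest" | "rest2 = rest" "Suc b < c" | "rest2 = rest" "c = Suc b" by linarith
      then show ?thesis
      proof cases
        case 1 then show ?thesis using yv by simp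
      next
        case 2 then show ?thesis using yv by simp
      next
        case 3
        then have "sum_list yu = a" using sums yv by simp
        then show ?thesis using rl_last_zeros[OF lyu] 3 yv by simp
      qed
    qed
    have "p = y \<or> rl y p"
    proof -
      have "rl y p \<longleftrightarrow> rl yv (Suc b # rest) \<or> (yv = Suc b # rest \<and> rl yu (a # replicate rr 0))"
        unfolding p_def ysp using rl_append[OF lenp1] by simp
      then show ?thesis using goal unfolding p_def ysp by auto
    qed
    then show ?thesis using pM rpx share by blast
  qed
qed

lemma share_in:
  assumes F: "F \<subseteq> Mon (Suc n) T" and k: "k \<le> n" and st: "comp n T k F = F"
    and x: "x \<in> F" and p: "p \<in> Mon (Suc n) T" and e: "p ! k = x ! k" and r: "rl p x"
  shows "p \<in> F"
proof -
  let ?c = "x ! k"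
  have xM: "x \<in> Mon (Suc n) T" using x F by blast
  have cT: "?c \<le> T" using Mon_nth_le[OF xM] k by simp
  have slF: "sl k ?c F = L n (T - ?c) (card (sl k ?c F))"
    using sl_comp[OF k, of ?c T F] cT st by simp
  have "del k x \<in> sl k ?c F" by (rule mem_sl[OF x])
  then have dx: "del k x \<in> L n (T - ?c) (card (sl k ?c F))" using slF by simp
  have lx: "length x = Suc n" "length p = Suc n" using xM p unfolding Mon_def by auto
  have "del k p \<in> Mon n (T - p ! k)" using del_Mon[OF p k] .
  then have dp: "del k p \<in> Mon n (T - ?c)" using e by simp
  have "rl (del k p) (del k x)" using rl_del[of p x k] lx e r k by simp
  then have "del k p \<in> L n (T - ?c) (card (sl k ?c F))" using L_mem dx dp by blast
  then have "del k p \<in> sl k ?c F" using slF by simp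
  then have "ins k ?c (del k p) \<in> F" using ins_sl[OF F k] by blast
  moreover have "ins k ?c (del k p) = p" using ins_del[of k p] lx k e by simp
  ultimately show ?thesis by simp
qed

lemma stable_dcl:
  assumes F: "F \<subseteq> Mon (Suc n) T" and n: "3 \<le> n" and st: "\<forall>k\<le>n. comp n T k F = F"
  shows "dcl (Suc n) T F"
proof -
  have main: "\<forall>x. rkM (Suc n) T x = m \<longrightarrow> x \<in> F \<longrightarrow> (\<forall>y\<in>Mon (Suc n) T. rl y x \<longrightarrow> y \<in> F)" for m
  proof (induction m rule: less_induct)
    case (less m)
    show ?case
    proof (intro allI impI ballI)
      fix x y assume m: "rkM (Suc n) T x = m" and x: "x \<in> F" and y: "y \<in> Mon (Suc n) T" and r: "rl y x"
      have xM: "x \<in> Mon (Suc n) T" using x F by blast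
      obtain p where p: "p \<in> Mon (Suc n) T" "rl p x" "p = y \<or> rl y p" "\<exists>k<Suc n. p ! k = x ! k"
        using pred_lemma[OF xM y r] n by auto
      obtain k where k: "k < Suc n" "p ! k = x ! k" using p(4) by blast
      have pF: "p \<in> F" using share_in[OF F _ _ x p(1) k(2) p(2)] st k(1) by simp
      show "y \<in> F"
      proof (cases "p = y")
        case True then show ?thesis using pF by simp
      next
        case False
        then have ryp: "rl y p" using p(3) by simp
        have "rkM (Suc n) T p < m" using m sto.rk_mono[OF sto_Mon p(2) p(1)] unfolding rkM_def by simp
        then show ?thesis using less.IH pF y ryp by blast
      qed
    qed
  qed
  show ?thesis unfolding dcl_def2 using F main by blast
qed

lemma P_step: assumes n: "3 \<le> n" and P: "Pn n" shows "Pn (Suc n)"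
  unfolding Pn_def
proof (intro allI impI)
  fix T G assume G: "G \<subseteq> Mon (Suc n) T"
  have main: "\<forall>G. Phi (Suc n) T G = m \<longrightarrow> G \<subseteq> Mon (Suc n) T \<longrightarrow>
      card (up (L (Suc n) T (card G))) \<le> card (up G)" for m
  proof (induction m rule: less_induct)
    case (less m)
    show ?case
    proof (intro allI impI)
      fix G assume m: "Phi (Suc n) T G = m" and G: "G \<subseteq> Mon (Suc n) T"
      show "card (up (L (Suc n) T (card G))) \<le> card (up G)"
      proof (cases "\<forall>k\<le>n. comp n T k G = G")
        case True
        then have "dcl (Suc n) T G" using stable_dcl[OF G n] by blast
        then have "G = L (Suc n) T (card G)" by (rule dcl_eq_L)
        then show ?thesis by simp
      next
        case False
        then obtain k where k: "k \<le> n" "comp n T k G \<noteq> G" by blast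
        let ?G' = "comp n T k G"
        have lt: "Phi (Suc n) T ?G' < m" using Phi_comp[OF G k(1)] k(2) m by simp
        have G'M: "?G' \<subseteq> Mon (Suc n) T" by (rule comp_Mon[OF k(1)])
        have "card (up (L (Suc n) T (card ?G'))) \<le> card (up ?G')"
          using less.IH[OF lt] G'M by blast
        moreover have "card ?G' = card G" by (rule card_comp[OF G k(1)])
        moreover have "card (up ?G') \<le> card (up G)" by (rule card_up_comp[OF G k(1) P])
        ultimately show ?thesis by simp
      qed
    qed
  qed
  show "card (up (L (Suc n) T (card G))) \<le> card (up G)" using main G by blast
qed

lemma Mon1: "Mon 1 T = {[T]}"
  unfolding Mon_def by (auto simp: length_Suc_conv)

lemma P1: "Pn 1"
  unfolding Pn_def
proof (intro allI impI)
  fix T G assume G: "G \<subseteq> Mon 1 T"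
  have "dcl 1 T G" unfolding dcl_def2 using G Mon1 rl_irr by auto
  then have "G = L 1 T (card G)" by (rule dcl_eq_L)
  then show "card (up (L 1 T (card G))) \<le> card (up G)" by simp
qed

lemma len2E: assumes "length x = 2" obtains a b where "x = [a, b]"
proof -
  obtain a t where "x = a # t" "length t = 1" using assms by (cases x) auto
  moreover obtain b where "t = [b]" using \<open>length t = 1\<close> by (cases t) auto
  ultimately show ?thesis using that by simp
qed

lemma Mon2: "Mon 2 D = (\<lambda>a. [a, D - a]) ` {..D}"
proof (intro set_eqI iffI)
  fix x assume "x \<in> Mon 2 D"
  then have "length x = 2" "sum_list x = D" unfolding Mon_def by auto
  then obtain a b where "x = [a, b]" "a + b = D" by (metis len2E sum_list_simps add.right_neutral)
  then show "x \<in> (\<lambda>a. [a, D - a]) ` {..D}" by force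
qed (auto simp: Mon_def)

lemma card_Mon2: "card (Mon 2 D) = Suc D"
proof -
  have "inj_on (\<lambda>a. [a, D - a]) {..D}" by (rule inj_onI) simp
  then show ?thesis unfolding Mon2 by (simp add: card_image)
qed

lemma up2_lower:
  assumes G: "G \<subseteq> Mon 2 D" and ne: "G \<noteq> {}"
  shows "Suc (card G) \<le> card (up G)"
proof -
  have finG: "finite G" using G finite_Mon finite_subset by blast
  have len: "\<And>x. x \<in> G \<Longrightarrow> length x = 2" using G unfolding Mon_def by auto
  define f where "f = (\<lambda>x::nat list. x[0 := Suc (x ! 0)])"
  have inj: "inj_on f G"
  proof (rule inj_onI)
    fix x y assume x: "x \<in> G" and y: "y \<in> G" and e: "f x = f y"
    obtain x0 x1 where "x = [x0, x1]" using len[OF x] len2E by blast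
    moreover obtain y0 y1 where "y = [y0, y1]" using len[OF y] len2E by blast
    ultimately show "x = y" using e unfolding f_def by simp
  qed
  obtain x where x: "x \<in> G" "\<forall>y\<in>G. x ! 0 \<le> y ! 0"
  proof -
    have "finite ((\<lambda>x. x ! 0) ` G)" "(\<lambda>x. x ! 0) ` G \<noteq> {}" using finG ne by auto
    then obtain m where "m \<in> (\<lambda>x. x ! 0) ` G" "\<forall>y\<in>G. m \<le> y ! 0"
      using Min_in Min_le by (metis (no_types, lifting) finite_imageI image_eqI finG)
    then show ?thesis using that by blast
  qed
  obtain x0 x1 where xx: "x = [x0, x1]" using len[OF x(1)] len2E by blast
  define z where "z = [x0, Suc x1]"
  have zu: "z \<in> up G" unfolding up_def z_def
    using x(1) xx by (intro CollectI exI[of _ x] exI[of _ 1]) auto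
  have zn: "z \<notin> f ` G"
  proof
    assume "z \<in> f ` G"
    then obtain w where w: "w \<in> G" "z = f w" by blast
    obtain w0 w1 where "w = [w0, w1]" using len[OF w(1)] len2E by blast
    then have "Suc w0 = x0" "w ! 0 = w0" using w unfolding z_def f_def by auto
    then show False using x(2) w(1) xx by force
  qed
  have sub: "f ` G \<subseteq> up G" unfolding up_def f_def using len by fastforce
  have "card (insert z (f ` G)) \<le> card (up G)"
    using zu sub finite_up[OF finG] by (intro card_mono) auto
  moreover have "card (insert z (f ` G)) = Suc (card G)"
    using zn finG inj by (simp add: card_image)
  ultimately show ?thesis by simp
qed

lemma L2_shape:
  assumes x: "x \<in> L 2 D q"
  shows "\<exists>a<q. x = [a, D - a] \<and> a \<le> D"
proof -
  have xM: "x \<in> Mon 2 D" using x L_sub by blast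
  then obtain a where a: "a \<le> D" "x = [a, D - a]" unfolding Mon2 by auto
  have rk: "rkM 2 D x < q" using x unfolding L_def rkM_def sto.seg_def[OF sto_Mon] by simp
  have "(\<lambda>b. [b, D - b]) ` {..<a} \<subseteq> {y\<in>Mon 2 D. rl y x}"
    using a by (auto simp: Mon2)
  then have "card ((\<lambda>b. [b, D - b]) ` {..<a}) \<le> card {y\<in>Mon 2 D. rl y x}"
    using finite_Mon by (intro card_mono) auto
  moreover have "inj_on (\<lambda>b. [b, D - b]) {..<a}" by (rule inj_onI) simp
  ultimately have "a \<le> rkM 2 D x"
    unfolding rkM_def sto.rk_def[OF sto_Mon] by (simp add: card_image)
  then show ?thesis using rk a by (intro exI[of _ a]) auto
qed

lemma up2_upper: "card (up (L 2 D q)) \<le> Suc q"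
proof -
  have "up (L 2 D q) \<subseteq> (\<lambda>a. [a, Suc D - a]) ` {..q}"
  proof
    fix m assume "m \<in> up (L 2 D q)"
    then obtain x i where m: "m = x[i := Suc (x ! i)]" "x \<in> L 2 D q" "i < length x"
      unfolding up_def by blast
    obtain a where a: "a < q" "x = [a, D - a]" "a \<le> D" using L2_shape[OF m(2)] by blast
    have "i = 0 \<or> i = 1" using m(3) a by auto
    then show "m \<in> (\<lambda>a. [a, Suc D - a]) ` {..q}"
    proof
      assume "i = 0"
      then have "m = [Suc a, Suc D - Suc a]" using m a by simp
      then show ?thesis using a by (intro image_eqI[of _ _ "Suc a"]) auto
    next
      assume "i = 1"
      then have "m = [a, Suc D - a]" using m a by (simp add: Suc_diff_le)
      then show ?thesis using a by (intro image_eqI[of _ _ a]) auto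
    qed
  qed
  then have "card (up (L 2 D q)) \<le> card ((\<lambda>a. [a, Suc D - a]) ` {..q})"
    by (intro card_mono) auto
  also have "\<dots> \<le> card {..q}" by (rule card_image_le) simp
  finally show ?thesis by simp
qed

lemma P2: "Pn 2"
  unfolding Pn_def
proof (intro allI impI)
  fix T G assume G: "G \<subseteq> Mon 2 T"
  show "card (up (L 2 T (card G))) \<le> card (up G)"
  proof (cases "G = {}")
    case True
    then have "L 2 T (card G) = {}" using card_L[of 2 T 0] L_sub finite_Mon
      by (metis card_0_eq finite_subset min_0L card.empty)
    then show ?thesis by simp
  next
    case False
    show ?thesis using up2_upper[of T "card G"] up2_lower[OF G False] by simp
  qed
qed

definition bb :: "nat \<Rightarrow> nat" where "bb x = (if 0 < x then 1 else 0)"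

definition tf :: "(nat \<Rightarrow> nat) \<Rightarrow> nat \<Rightarrow> nat" where
  "tf p c = max (p c + bb (p c)) (if c = 0 then 0 else p (c - 1))"

lemma sq_ge: "(d::nat) \<le> d * d \<or> d = 0"
  by (cases d) auto

lemma NL_step:
  fixes S' N' p0 x A :: nat
  assumes IH: "S' \<le> N'" "2 * S' + (N' - S') \<le> (N' - S') * (N' - S')" "0 < x \<longrightarrow> x < N' - S'"
    and N': "N' = x + bb x + A"
  defines "S \<equiv> p0 + S'" and "N \<equiv> p0 + bb p0 + max (x + bb x) p0 + A"
  shows "S \<le> N \<and> 2 * S + (N - S) \<le> (N - S) * (N - S) \<and> (0 < p0 \<longrightarrow> p0 < N - S)"
proof -
  define D' where "D' = N' - S'"
  have D'eq: "N' = S' + D'" using IH(1) D'_def by simp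
  show ?thesis
  proof (cases "p0 = 0")
    case True
    then have "N = N'" unfolding N_def N' bb_def by simp
    then show ?thesis using IH True unfolding S_def by simp
  next
    case False
    then have b0: "bb p0 = 1" unfolding bb_def by simp
    show ?thesis
    proof (cases "p0 \<le> x + bb x")
      case True
      then have Neq: "N = N' + p0 + 1" unfolding N_def N' using b0 by simp
      have x0: "0 < x" using True False unfolding bb_def by (cases "x = 0") auto
      then have "x < D'" using IH(3) D'_def by simp
      then have "p0 \<le> D'" using True x0 unfolding bb_def by simp
      have NS: "N - S = D' + 1" unfolding S_def using Neq D'eq by simp
      have "2 * S' + D' \<le> D' * D'" using IH(2) D'_def by simp
      moreover obtain Q where Q: "Q = D' * D'" by blast
      ultimately have "2 * S' + D' \<le> Q" by simp
      then have "2 * (p0 + S') + (D' + 1) \<le> Q + 2 * D' + 1" using \<open>p0 \<le> D'\<close> by arith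
      then have i1: "2 * (p0 + S') + (D' + 1) \<le> D' * D' + 2 * D' + 1" using Q by simp
      have "(D' + 1) * (D' + 1) = D' * D' + 2 * D' + 1" by (simp add: algebra_simps)
      then have "2 * S + (N - S) \<le> (N - S) * (N - S)"
        unfolding NS unfolding S_def using i1 by simp
      moreover have "S \<le> N" unfolding S_def using Neq D'eq by simp
      moreover have "p0 < N - S" using NS \<open>p0 \<le> D'\<close> by simp
      ultimately show ?thesis by blast
    next
      case False2: False
      define \<delta> where "\<delta> = p0 - (x + bb x)"
      have dpos: "1 \<le> \<delta>" using False2 \<delta>_def by arith
      have p0eq: "p0 = x + bb x + \<delta>" using False2 \<delta>_def by arith
      have Neq: "N = N' + p0 + 1 + \<delta>" unfolding N_def N' using b0 False2 p0eq by simp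
      have NS: "N - S = D' + 1 + \<delta>" unfolding S_def using Neq D'eq by simp
      have xbx: "x + bb x \<le> D'"
      proof (cases "x = 0")
        case True then show ?thesis unfolding bb_def by simp
      next
        case False then show ?thesis using IH(3) D'_def unfolding bb_def by simp
      qed
      have h2: "2 * S' + D' \<le> D' * D'" using IH(2) D'_def by simp
      have dd: "\<delta> \<le> \<delta> * \<delta>" using dpos by simp
      have ex: "(D' + 1 + \<delta>) * (D' + 1 + \<delta>) = D' * D' + 2 * D' + 2 * (D' * \<delta>) + 1 + 2 * \<delta> + \<delta> * \<delta>"
        by (simp add: algebra_simps)
      have i2: "2 * (x + bb x + \<delta> + S') + (D' + 1 + \<delta>) \<le> D' * D' + 2 * D' + 2 * (D' * \<delta>) + 1 + 2 * \<delta> + \<delta> * \<delta>"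
        using h2 xbx dd by arith
      have "2 * S + (N - S) \<le> (N - S) * (N - S)"
        unfolding NS ex unfolding S_def p0eq using i2 by simp
      moreover have "S \<le> N" unfolding S_def using Neq D'eq by simp
      moreover have "p0 < N - S" using NS xbx p0eq by simp
      ultimately show ?thesis by blast
    qed
  qed
qed

lemma NL:
  "\<forall>c>T. p c = 0 \<Longrightarrow>
   (\<Sum>c\<le>T. p c) \<le> (\<Sum>c\<le>Suc T. tf p c) \<and>
   2 * (\<Sum>c\<le>T. p c) + ((\<Sum>c\<le>Suc T. tf p c) - (\<Sum>c\<le>T. p c))
     \<le> ((\<Sum>c\<le>Suc T. tf p c) - (\<Sum>c\<le>T. p c)) * ((\<Sum>c\<le>Suc T. tf p c) - (\<Sum>c\<le>T. p c)) \<and>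
   (0 < p 0 \<longrightarrow> p 0 < (\<Sum>c\<le>Suc T. tf p c) - (\<Sum>c\<le>T. p c))"
proof (induction T arbitrary: p)
  case 0
  have p1: "p 1 = 0" using 0 by simp
  have e: "(\<Sum>c\<le>Suc 0. tf p c) = p 0 + bb (p 0) + p 0"
    unfolding tf_def using p1 by (simp add: bb_def)
  show ?case
  proof (cases "p 0 = 0")
    case True then show ?thesis unfolding e by (simp add: bb_def)
  next
    case False
    then have "bb (p 0) = 1" unfolding bb_def by simp
    moreover have "(p 0 + 1) * (p 0 + 1) = p 0 * p 0 + 2 * p 0 + 1" by (simp add: algebra_simps)
    moreover have "p 0 \<le> p 0 * p 0" using False by simp
    ultimately show ?thesis unfolding e by simp
  qed
next
  case (Suc T)
  define q where "q = (\<lambda>c. p (Suc c))"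
  have q0: "\<forall>c>T. q c = 0" using Suc.prems unfolding q_def by simp
  note IH = Suc.IH[OF q0]
  define A where "A = (\<Sum>c\<le>T. tf q (Suc c))"
  have tfq: "tf p (Suc (Suc c)) = tf q (Suc c)" for c unfolding tf_def q_def by simp
  have N1: "(\<Sum>c\<le>Suc (Suc T). tf p c) = tf p 0 + (tf p 1 + A)"
    unfolding A_def by (simp only: sum.atMost_Suc_shift tfq) simp
  have N2: "(\<Sum>c\<le>Suc T. tf q c) = tf q 0 + A"
    unfolding A_def by (simp only: sum.atMost_Suc_shift)
  have S1: "(\<Sum>c\<le>Suc T. p c) = p 0 + (\<Sum>c\<le>T. q c)"
    unfolding q_def by (simp only: sum.atMost_Suc_shift)
  have t0: "tf p 0 = p 0 + bb (p 0)" unfolding tf_def by simp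
  have t1: "tf p 1 = max (q 0 + bb (q 0)) (p 0)" unfolding tf_def q_def by simp
  have tq0: "tf q 0 = q 0 + bb (q 0)" unfolding tf_def by simp
  have N1': "(\<Sum>c\<le>Suc (Suc T). tf p c) = p 0 + bb (p 0) + max (q 0 + bb (q 0)) (p 0) + A"
    using N1 t0 t1 by (simp add: add.assoc)
  have N2': "(\<Sum>c\<le>Suc T. tf q c) = q 0 + bb (q 0) + A" using N2 tq0 by simp
  have IH1: "(\<Sum>c\<le>T. q c) \<le> (\<Sum>c\<le>Suc T. tf q c)"
    and IH2: "2 * (\<Sum>c\<le>T. q c) + ((\<Sum>c\<le>Suc T. tf q c) - (\<Sum>c\<le>T. q c))
     \<le> ((\<Sum>c\<le>Suc T. tf q c) - (\<Sum>c\<le>T. q c)) * ((\<Sum>c\<le>Suc T. tf q c) - (\<Sum>c\<le>T. q c))"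
    and IH3: "0 < q 0 \<longrightarrow> q 0 < (\<Sum>c\<le>Suc T. tf q c) - (\<Sum>c\<le>T. q c)"
    using IH by blast+
  have R: "p 0 + (\<Sum>c\<le>T. q c) \<le> p 0 + bb (p 0) + max (q 0 + bb (q 0)) (p 0) + A \<and>
    2 * (p 0 + (\<Sum>c\<le>T. q c)) + (p 0 + bb (p 0) + max (q 0 + bb (q 0)) (p 0) + A - (p 0 + (\<Sum>c\<le>T. q c)))
    \<le> (p 0 + bb (p 0) + max (q 0 + bb (q 0)) (p 0) + A - (p 0 + (\<Sum>c\<le>T. q c))) *
       (p 0 + bb (p 0) + max (q 0 + bb (q 0)) (p 0) + A - (p 0 + (\<Sum>c\<le>T. q c))) \<and>
    (0 < p 0 \<longrightarrow> p 0 < p 0 + bb (p 0) + max (q 0 + bb (q 0)) (p 0) + A - (p 0 + (\<Sum>c\<le>T. q c)))"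
    by (rule NL_step[OF IH1 IH2 IH3 N2'])
  show ?case unfolding N1' S1 by (rule R)
qed

section \<open>The case of three variables\<close>

lemma sl_dcl:
  assumes S: "dcl (Suc n) T S" and k: "k \<le> n" and c: "c \<le> T"
  shows "dcl n (T - c) (sl k c S)"
  unfolding dcl_def2
proof (intro conjI allI impI)
  have SM: "S \<subseteq> Mon (Suc n) T" using S unfolding dcl_def2 by blast
  show "sl k c S \<subseteq> Mon n (T - c)" by (rule sl_Mon[OF SM k])
  fix x y assume y: "y \<in> sl k c S" and x: "x \<in> Mon n (T - c)" and r: "rl x y"
  have yM: "y \<in> Mon n (T - c)" using y sl_Mon[OF SM k] by blast
  have lxy: "length x = n" "length y = n" using x yM unfolding Mon_def by auto
  have iy: "ins k c y \<in> S" using ins_sl[OF SM k y] .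
  have ix: "ins k c x \<in> Mon (Suc n) T" using ins_Mon[OF x k, of c] c by simp
  have "rl (ins k c x) (ins k c y)" using rl_ins[of x y k c] lxy k r by simp
  then have "ins k c x \<in> S" using S iy ix unfolding dcl_def2 by blast
  moreover have "(ins k c x) ! k = c" using nth_ins[of k x c] lxy k by simp
  ultimately have "del k (ins k c x) \<in> sl k c S" using mem_sl by metis
  then show "x \<in> sl k c S" using del_ins[of k x c] lxy k by simp
qed

lemma sum_ind: "c0 \<le> T \<Longrightarrow> (\<Sum>c\<le>T. (if c0 < c then 1 else 0::nat)) = T - c0"
proof (induction T)
  case 0 then show ?case by simp
next
  case (Suc T)
  show ?case
  proof (cases "c0 = Suc T")
    case True
    then have "(\<Sum>c\<le>Suc T. (if c0 < c then 1 else 0::nat)) = 0" by (intro sum.neutral) auto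
    then show ?thesis using True by simp
  next
    case False
    then have "c0 \<le> T" using Suc.prems by simp
    then show ?thesis using Suc.IH by simp
  qed
qed

lemma gauss_W: "c0 \<le> T \<Longrightarrow>
  2 * (\<Sum>c\<le>T. (if c0 < c then T - c + 1 else 0::nat)) = (T - c0) * (T - c0 + 1)"
proof (induction T)
  case 0 then show ?case by simp
next
  case (Suc T)
  show ?case
  proof (cases "c0 = Suc T")
    case True
    then have "(\<Sum>c\<le>Suc T. (if c0 < c then Suc T - c + 1 else 0::nat)) = 0" by (intro sum.neutral) auto
    then show ?thesis using True by simp
  next
    case False
    then have cT: "c0 \<le> T" using Suc.prems by simp
    have "(\<Sum>c\<le>T. (if c0 < c then Suc T - c + 1 else 0::nat))
        = (\<Sum>c\<le>T. (if c0 < c then T - c + 1 else 0::nat)) + (\<Sum>c\<le>T. (if c0 < c then 1 else 0::nat))"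
      by (subst sum.distrib[symmetric]) (intro sum.cong, auto simp: Suc_diff_le)
    also have "\<dots> = (\<Sum>c\<le>T. (if c0 < c then T - c + 1 else 0::nat)) + (T - c0)"
      using sum_ind[OF cT] by simp
    finally have e: "(\<Sum>c\<le>Suc T. (if c0 < c then Suc T - c + 1 else 0::nat))
        = (\<Sum>c\<le>T. (if c0 < c then T - c + 1 else 0::nat)) + (T - c0) + 1"
      using cT by simp
    obtain W where W: "W = (\<Sum>c\<le>T. (if c0 < c then T - c + 1 else 0::nat))" by blast
    obtain d where d: "T = c0 + d" using cT le_Suc_ex by blast
    have hW: "2 * W = d * (d + 1)" using Suc.IH[OF cT] W d by simp
    have "(Suc T - c0) * (Suc T - c0 + 1) = d * (d + 1) + 2 * d + 2" using d by (simp add: algebra_simps)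
    then show ?thesis unfolding e W[symmetric] using hW d by simp
  qed
qed

lemma L_zero: "L n T 0 = {}"
  unfolding L_def sto.seg_def[OF sto_Mon] by simp

lemma P3: "Pn 3"
  unfolding Pn_def
proof (intro allI impI)
  fix T G assume G3: "G \<subseteq> Mon 3 T"
  have G: "G \<subseteq> Mon (Suc 2) T" using G3 by (simp add: numeral_3_eq_3)
  have k: "(2::nat) \<le> 2" by simp
  let ?s = "card G"
  show "card (up (L 3 T (card G))) \<le> card (up G)"
  proof (cases "?s = 0")
    case True
    then have "L 3 T (card G) = {}" using L_zero[of 3 T] by simp
    then show ?thesis by simp
  next
    case False
    then have s0: "1 \<le> ?s" by simp
    define p where "p = (\<lambda>c. card (sl 2 c G))"
    have finsl: "finite (sl 2 c G)" for c using sl_Mon[OF G k] finite_Mon finite_subset by blast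
    have pz: "\<forall>c>T. p c = 0"
    proof (intro allI impI)
      fix c assume "T < c"
      have "sl 2 c G = {}"
        using Mon_nth_le[of _ "Suc 2" T 2] G \<open>T < c\<close> unfolding sl_def by fastforce
      then show "p c = 0" unfolding p_def by simp
    qed
    have sG: "?s = (\<Sum>c\<le>T. p c)" unfolding p_def using card_decomp[OF G k order_refl] .
    have termG: "tf p c \<le> card (up (sl 2 c G) \<union> (if c = 0 then {} else sl 2 (c - 1) G))" for c
    proof -
      have f1: "finite (up (sl 2 c G))" using finite_up finsl by blast
      have f2: "finite (if c = 0 then {} else sl 2 (c - 1) G)" using finsl by simp
      have "p c + bb (p c) \<le> card (up (sl 2 c G))"
      proof (cases "sl 2 c G = {}")
        case True then show ?thesis unfolding p_def bb_def by simp
      next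
        case False
        have "Suc (card (sl 2 c G)) \<le> card (up (sl 2 c G))"
          using up2_lower[OF sl_Mon[OF G k] False] .
        then show ?thesis unfolding p_def bb_def using False finsl by (simp add: card_gt_0_iff)
      qed
      moreover have "(if c = 0 then 0 else p (c - 1)) = card (if c = 0 then {} else sl 2 (c - 1) G)"
        unfolding p_def by simp
      ultimately show ?thesis unfolding tf_def using card_Un_ge[OF f1 f2] by linarith
    qed
    have NG: "(\<Sum>c\<le>Suc T. tf p c) \<le> card (up G)"
      unfolding card_up_decomp[OF G k] by (rule sum_mono) (use termG in auto)
    note NLp = NL[OF pz]
    have n1: "(\<Sum>c\<le>T. p c) \<le> (\<Sum>c\<le>Suc T. tf p c)" using conjunct1[OF NLp] .
    have n2: "2 * (\<Sum>c\<le>T. p c) + ((\<Sum>c\<le>Suc T. tf p c) - (\<Sum>c\<le>T. p c))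
     \<le> ((\<Sum>c\<le>Suc T. tf p c) - (\<Sum>c\<le>T. p c)) * ((\<Sum>c\<le>Suc T. tf p c) - (\<Sum>c\<le>T. p c))"
      using conjunct1[OF conjunct2[OF NLp]] .
    define E where "E = (\<Sum>c\<le>Suc T. tf p c) - ?s"
    have E1: "2 * ?s + E \<le> E * E" unfolding E_def sG by (rule n2)
    have E2: "?s + E \<le> card (up G)" unfolding E_def sG using n1 NG by arith
    let ?L = "L (Suc 2) T ?s"
    have L3: "L 3 T ?s = ?L" by (simp add: numeral_3_eq_3)
    have LM: "?L \<subseteq> Mon (Suc 2) T" by (rule L_sub)
    have cardMon: "?s \<le> card (Mon (Suc 2) T)" by (rule card_mono[OF finite_Mon G])
    have cL: "card ?L = ?s" using card_L cardMon by (simp add: min_absorb1)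
    have dL: "dcl (Suc 2) T ?L" by (rule dcl_L)
    have finslL: "finite (sl 2 c ?L)" for c using sl_Mon[OF LM k] finite_Mon finite_subset by blast
    have exc: "\<exists>c. sl 2 c ?L \<noteq> {}"
    proof -
      have "?L \<noteq> {}" using cL s0 by auto
      then obtain x where "x \<in> ?L" by blast
      then have "del 2 x \<in> sl 2 (x ! 2) ?L" by (rule mem_sl)
      then show ?thesis by blast
    qed
    define c0 where "c0 = (LEAST c. sl 2 c ?L \<noteq> {})"
    have c0ne: "sl 2 c0 ?L \<noteq> {}" unfolding c0_def using exc by (rule LeastI_ex)
    have below: "sl 2 c ?L = {}" if "c < c0" for c
      using not_less_Least[of c "\<lambda>c. sl 2 c ?L \<noteq> {}"] that unfolding c0_def by simp
    obtain x0 where x0: "x0 \<in> ?L" "x0 ! 2 = c0" using c0ne unfolding sl_def by blast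
    have x0M: "x0 \<in> Mon (Suc 2) T" using x0 LM by blast
    have c0T: "c0 \<le> T" using Mon_nth_le[OF x0M, of 2] x0 by simp
    have above: "sl 2 c ?L = Mon 2 (T - c)" if "c0 < c" "c \<le> T" for c
    proof
      show "sl 2 c ?L \<subseteq> Mon 2 (T - c)" by (rule sl_Mon[OF LM k])
      show "Mon 2 (T - c) \<subseteq> sl 2 c ?L"
      proof
        fix y assume y: "y \<in> Mon 2 (T - c)"
        have ly: "length y = 2" using y unfolding Mon_def by simp
        have iy: "ins 2 c y \<in> Mon (Suc 2) T" using ins_Mon[OF y k, of c] that by simp
        have lx0: "length x0 = 3" using x0M unfolding Mon_def by simp
        obtain a0 a1 a2 where xx: "x0 = [a0, a1, a2]" using lx0
          by (cases x0; cases "tl x0"; cases "tl (tl x0)") auto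
        obtain b0 b1 where yy: "y = [b0, b1]" using ly len2E by blast
        have "rl (ins 2 c y) x0" using xx yy x0(2) that by (simp add: numeral_2_eq_2)
        then have "ins 2 c y \<in> ?L" using dL x0(1) iy unfolding dcl_def2 by blast
        moreover have "ins 2 c y ! 2 = c" using nth_ins[of 2 y c] ly by simp
        ultimately have "del 2 (ins 2 c y) \<in> sl 2 c ?L" using mem_sl by metis
        then show "y \<in> sl 2 c ?L" using del_ins[of 2 y c] ly by simp
      qed
    qed
    define q where "q = card (sl 2 c0 ?L)"
    have q1: "1 \<le> q" unfolding q_def using c0ne finslL by (simp add: card_gt_0_iff Suc_le_eq)
    have slc0: "sl 2 c0 ?L = L 2 (T - c0) q"
      unfolding q_def using dcl_eq_L[OF sl_dcl[OF dL k c0T]] .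
    have termL: "card (up (sl 2 c ?L) \<union> (if c = 0 then {} else sl 2 (c - 1) ?L))
        \<le> card (sl 2 c ?L) + (if c0 \<le> c then 1 else 0)" if c: "c \<le> Suc T" for c
    proof -
      consider "c < c0" | "c = c0" | "c0 < c" by linarith
      then show ?thesis
      proof cases
        case 1
        then have "sl 2 c ?L = {}" "c \<noteq> 0 \<Longrightarrow> sl 2 (c - 1) ?L = {}" using below by auto
        then show ?thesis by simp
      next
        case 2
        have "c \<noteq> 0 \<Longrightarrow> sl 2 (c - 1) ?L = {}" using below 2 by simp
        then have "up (sl 2 c ?L) \<union> (if c = 0 then {} else sl 2 (c - 1) ?L) = up (L 2 (T - c0) q)"
          using slc0 2 by simp
        then show ?thesis using up2_upper[of "T - c0" q] 2 q_def by simp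
      next
        case 3
        have sub: "up (sl 2 c ?L) \<union> (if c = 0 then {} else sl 2 (c - 1) ?L) \<subseteq> Mon 2 (Suc T - c)"
        proof -
          have "up (sl 2 c ?L) \<subseteq> Mon 2 (Suc T - c)"
          proof (cases "c \<le> T")
            case True
            then have "up (sl 2 c ?L) \<subseteq> Mon 2 (Suc (T - c))" using up_Mon sl_Mon[OF LM k] by blast
            then show ?thesis using True by (simp add: Suc_diff_le)
          next
            case False
            then have "sl 2 c ?L = {}"
              using Mon_nth_le[of _ "Suc 2" T 2] LM unfolding sl_def by fastforce
            then show ?thesis by simp
          qed
          moreover have "sl 2 (c - 1) ?L \<subseteq> Mon 2 (Suc T - c)"
            using sl_Mon[OF LM k, of "c - 1"] 3 c by (simp add: Suc_diff_le)
          ultimately show ?thesis using 3 by auto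
        qed
        have "card (up (sl 2 c ?L) \<union> (if c = 0 then {} else sl 2 (c - 1) ?L)) \<le> card (Mon 2 (Suc T - c))"
          using sub finite_Mon card_mono by blast
        also have "\<dots> = Suc (Suc T - c)" by (rule card_Mon2)
        also have "\<dots> \<le> card (sl 2 c ?L) + 1"
        proof (cases "c \<le> T")
          case True
          then show ?thesis using above[OF 3 True] card_Mon2[of "T - c"] by (simp add: Suc_diff_le)
        next
          case False
          then show ?thesis using c by simp
        qed
        finally show ?thesis using 3 by simp
      qed
    qed
    have sumL: "(\<Sum>c\<le>Suc T. card (sl 2 c ?L)) = ?s"
      using card_decomp[OF LM k, of "Suc T"] cL by simp
    have sumI: "(\<Sum>c\<le>Suc T. (if c0 \<le> c then 1 else 0::nat)) = Suc T - c0 + 1"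
    proof -
      show ?thesis
      proof (cases c0)
        case 0
        then show ?thesis by simp
      next
        case (Suc c0')
        have "(\<Sum>c\<le>Suc T. (if c0 \<le> c then 1 else 0::nat)) = (\<Sum>c\<le>Suc T. (if c0' < c then 1 else 0::nat))"
          using Suc by (intro sum.cong) auto
        also have "\<dots> = Suc T - c0'" using sum_ind[of c0' "Suc T"] Suc c0T by simp
        finally show ?thesis using Suc c0T by simp
      qed
    qed
    have UL: "card (up ?L) \<le> ?s + (T - c0 + 2)"
    proof -
      have "card (up ?L) = (\<Sum>c\<le>Suc T. card (up (sl 2 c ?L) \<union> (if c = 0 then {} else sl 2 (c - 1) ?L)))"
        by (rule card_up_decomp[OF LM k])
      also have "\<dots> \<le> (\<Sum>c\<le>Suc T. card (sl 2 c ?L) + (if c0 \<le> c then 1 else 0))"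
        by (rule sum_mono) (use termL in auto)
      also have "\<dots> = ?s + (Suc T - c0 + 1)" using sumL sumI by (simp add: sum.distrib)
      finally show ?thesis using c0T by simp
    qed
    define t where "t = T - c0"
    have sW: "2 + t * (t + 1) \<le> 2 * ?s"
    proof -
      have "(\<Sum>c\<le>T. (if c0 < c then T - c + 1 else 0::nat)) + (if c0 \<le> T then q else 0) \<le> (\<Sum>c\<le>T. card (sl 2 c ?L))"
      proof -
        have "(\<Sum>c\<le>T. (if c0 < c then T - c + 1 else 0::nat) + (if c = c0 then q else 0)) \<le> (\<Sum>c\<le>T. card (sl 2 c ?L))"
        proof (rule sum_mono)
          fix c assume "c \<in> {..T}"
          then show "(if c0 < c then T - c + 1 else 0::nat) + (if c = c0 then q else 0) \<le> card (sl 2 c ?L)"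
            using above[of c] card_Mon2[of "T - c"] q_def by auto
        qed
        moreover have "(\<Sum>c\<le>T. (if c = c0 then q else 0::nat)) = q" using c0T by simp
        ultimately show ?thesis using c0T by (simp add: sum.distrib)
      qed
      moreover have "(\<Sum>c\<le>T. card (sl 2 c ?L)) = ?s" using card_decomp[OF LM k order_refl] cL by simp
      ultimately have "(\<Sum>c\<le>T. (if c0 < c then T - c + 1 else 0::nat)) + q \<le> ?s" using c0T by simp
      then show ?thesis using gauss_W[OF c0T] q1 unfolding t_def by linarith
    qed
    have Et: "t + 2 \<le> E"
    proof (rule ccontr)
      assume "\<not> t + 2 \<le> E"
      then have Ele: "E \<le> t + 1" by simp
      obtain P1 where P1: "P1 = E * E" by blast
      obtain P2 where P2: "P2 = E * (t + 1)" by blast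
      obtain P3 where P3: "P3 = t * (t + 1)" by blast
      have "E * E \<le> E * (t + 1)" using Ele by (rule mult_le_mono2)
      then have a1: "P1 \<le> P2" using P1 P2 by simp
      have "E * (t + 1) = E * t + E" by (simp add: algebra_simps)
      moreover have "E * t \<le> (t + 1) * t" using Ele by (rule mult_le_mono1)
      ultimately have a2: "P2 \<le> P3 + E" using P2 P3 by (simp add: algebra_simps)
      have a3: "2 * ?s + E \<le> P1" using E1 P1 by simp
      have a4: "2 + P3 \<le> 2 * ?s" using sW P3 by simp
      show False using a1 a2 a3 a4 by arith
    qed
    show ?thesis unfolding L3 using UL E2 Et unfolding t_def by arith
  qed
qed

lemma Pn_all: "1 \<le> n \<Longrightarrow> Pn n"
proof (induction n rule: less_induct)
  case (less n)
  consider "n = 1" | "n = 2" | "n = 3" | "4 \<le> n" using less.prems by linarith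
  then show ?case
  proof cases
    case 1 then show ?thesis using P1 by simp
  next
    case 2 then show ?thesis using P2 by simp
  next
    case 3 then show ?thesis using P3 by simp
  next
    case 4
    then obtain n' where n': "n = Suc n'" "3 \<le> n'" by (cases n) auto
    then have "Pn n'" using less.IH by simp
    then show ?thesis using P_step n' by simp
  qed
qed

theorem macaulay:
  assumes "1 \<le> n" "G \<subseteq> Mon n T"
  shows "card (up (L n T (card G))) \<le> card (up G)"
  using Pn_all[OF assms(1)] assms(2) unfolding Pn_def by blast

section \<open>From gap lists to sets\<close>

fun S :: "nat list \<Rightarrow> nat set" where
  "S [] = {}"
| "S (a # as) = insert (Suc a) ((\<lambda>x. x + Suc a) ` S as)"

lemma S_pos: "x \<in> S as \<Longrightarrow> 0 < x"
  by (induction as arbitrary: x) auto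

lemma S_bound: "x \<in> S as \<Longrightarrow> x \<le> sum_list as + length as"
  by (induction as arbitrary: x) fastforce+

lemma S_max: "as \<noteq> [] \<Longrightarrow> sum_list as + length as \<in> S as"
proof (induction as)
  case Nil then show ?case by simp
next
  case (Cons a as)
  show ?case
  proof (cases "as = []")
    case True then show ?thesis by simp
  next
    case False
    then have "sum_list as + length as \<in> S as" using Cons by simp
    then show ?thesis by (auto intro: image_eqI[of _ _ "sum_list as + length as"])
  qed
qed

lemma finite_S: "finite (S as)"
  by (induction as) auto

lemma card_S: "card (S as) = length as"
proof (induction as)
  case Nil then show ?case by simp
next
  case (Cons a as)
  have "Suc a \<notin> (\<lambda>x. x + Suc a) ` S as" by (auto dest: S_pos)
  moreover have "card ((\<lambda>x. x + Suc a) ` S as) = card (S as)" by (rule card_image) (rule inj_onI, simp)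
  ultimately show ?case using Cons finite_S by simp
qed

lemma S_snoc: "S (as @ [a]) = insert (sum_list as + length as + Suc a) (S as)"
  by (induction as) (auto simp: algebra_simps)

lemma S_inj: "length as = length bs \<Longrightarrow> S as = S bs \<Longrightarrow> as = bs"
proof (induction as arbitrary: bs)
  case Nil then show ?case by simp
next
  case (Cons a as)
  then obtain b bs' where bs: "bs = b # bs'" "length as = length bs'" by (cases bs) auto
  have mina: "Min (S (a # as)) = Suc a"
    using S_pos[of _ as] finite_S[of as] by (intro Min_eqI) (auto intro: finite_S)
  have minb: "Min (S (b # bs')) = Suc b"
    using S_pos[of _ bs'] finite_S[of bs'] by (intro Min_eqI) (auto intro: finite_S)
  have ab: "a = b" using mina minb Cons.prems bs by simp
  have "(\<lambda>x. x + Suc a) ` S as = (\<lambda>x. x + Suc a) ` S bs'"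
  proof -
    have h1: "S (a # as) - {Suc a} = (\<lambda>x. x + Suc a) ` S as" by (auto dest: S_pos)
    have h2: "S (b # bs') - {Suc a} = (\<lambda>x. x + Suc a) ` S bs'" using ab by (auto dest: S_pos)
    have e: "S (a # as) = S (b # bs')" using Cons.prems bs by simp
    have "(\<lambda>x. x + Suc a) ` S as = S (a # as) - {Suc a}" using h1 by (rule sym)
    also have "\<dots> = S (b # bs') - {Suc a}" by (simp only: e)
    also have "\<dots> = (\<lambda>x. x + Suc a) ` S bs'" by (rule h2)
    finally show ?thesis .
  qed
  then have "S as = S bs'" by (rule inj_image_eq_iff[THEN iffD1, rotated]) (rule inj_onI, simp)
  then show ?case using Cons.IH bs ab by simp
qed

lemma S_surj: "finite u \<Longrightarrow> 0 \<notin> u \<Longrightarrow> \<exists>as. length as = card u \<and> S as = u"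
proof (induction "card u" arbitrary: u)
  case 0
  then have "u = {}" by simp
  then show ?case by (intro exI[of _ "[]"]) simp
next
  case (Suc n)
  then have ne: "u \<noteq> {}" by auto
  define m0 where "m0 = Min u"
  have m0u: "m0 \<in> u" unfolding m0_def using Suc.prems ne by simp
  then obtain a where a: "m0 = Suc a" using Suc.prems by (cases m0) auto
  have m0le: "\<forall>x\<in>u. m0 \<le> x" unfolding m0_def using Suc.prems by simp
  define u' where "u' = (\<lambda>x. x - Suc a) ` (u - {m0})"
  have inj: "inj_on (\<lambda>x. x - Suc a) (u - {m0})"
    by (rule inj_onI) (use m0le a in force)
  have cu': "card u' = n" unfolding u'_def using card_image[OF inj] Suc.hyps(2) Suc.prems m0u by simp
  have "0 \<notin> u'" unfolding u'_def using m0le a by force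
  moreover have "finite u'" unfolding u'_def using Suc.prems by simp
  ultimately obtain as where as: "length as = card u'" "S as = u'" using Suc.hyps(1) cu' by metis
  have "(\<lambda>x. x + Suc a) ` u' = u - {m0}"
  proof -
    have "(\<lambda>x. x + Suc a) ` u' = (\<lambda>x. x - Suc a + Suc a) ` (u - {m0})" unfolding u'_def by (simp add: image_image)
    also have "\<dots> = (\<lambda>x. x) ` (u - {m0})"
      by (rule image_cong) (use m0le a in force)+
    finally show ?thesis by simp
  qed
  then have "S (a # as) = u" using as a m0u by auto
  moreover have "length (a # as) = card u" using as cu' Suc.hyps(2) by simp
  ultimately show ?case by blast
qed

lemma sq_less_S:
  "length as = length bs \<Longrightarrow>
   sq_less (S as) (S bs) \<longleftrightarrow> (sum_list as < sum_list bs \<or> (sum_list as = sum_list bs \<and> rl as bs))"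
proof (induction as arbitrary: bs rule: rev_induct)
  case Nil then show ?case by (simp add: sq_less_def)
next
  case (snoc a as)
  obtain bs' b where bs: "bs = bs' @ [b]" "length as = length bs'"
    using snoc.prems by (metis append_butlast_last_id length_0_conv length_butlast length_append_singleton diff_Suc_1 Nil_is_append_conv not_Cons_self2)
  define Ma where "Ma = sum_list as + length as + Suc a"
  define Mb where "Mb = sum_list bs' + length bs' + Suc b"
  have Sa: "S (as @ [a]) = insert Ma (S as)" unfolding Ma_def by (rule S_snoc)
  have Sb: "S bs = insert Mb (S bs')" unfolding Mb_def bs by (rule S_snoc)
  have la: "\<forall>x\<in>S as. x < Ma" using S_bound[of _ as] unfolding Ma_def by fastforce
  have lb: "\<forall>x\<in>S bs'. x < Mb" using S_bound[of _ bs'] unfolding Mb_def by fastforce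
  have fin: "finite (S as)" "finite (S bs')" by (rule finite_S)+
  have rla: "rl (as @ [a]) (bs' @ [b]) \<longleftrightarrow> (b < a \<or> (a = b \<and> rl as bs'))"
    using rl_append[OF bs(2), of "[a]" "[b]"] by auto
  consider "Ma < Mb" | "Mb < Ma" | "Ma = Mb" by linarith
  then show ?case
  proof cases
    case 1
    let ?D = "(insert Ma (S as) - insert Mb (S bs')) \<union> (insert Mb (S bs') - insert Ma (S as))"
    have "Mb \<in> ?D" using 1 la by auto
    moreover have "\<forall>x\<in>?D. x \<le> Mb" using 1 la lb by force
    moreover have "finite ?D" using fin by simp
    ultimately have MD: "Max ?D = Mb" by (intro Max_eqI) auto
    have nMb: "Mb \<notin> insert Ma (S as)"
    proof
      assume "Mb \<in> insert Ma (S as)"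
      then have "Mb = Ma \<or> Mb \<in> S as" by simp
      then show False using 1 la by auto
    qed
    have neq: "insert Ma (S as) \<noteq> insert Mb (S bs')" using nMb by blast
    have "sq_less (S (as @ [a])) (S bs)" unfolding sq_less_def Sa Sb using neq MD by simp
    moreover have "sum_list (as @ [a]) < sum_list bs" using 1 bs unfolding Ma_def Mb_def by simp
    ultimately show ?thesis by simp
  next
    case 2
    let ?D = "(insert Ma (S as) - insert Mb (S bs')) \<union> (insert Mb (S bs') - insert Ma (S as))"
    have "Ma \<in> ?D" using 2 lb by auto
    moreover have "\<forall>x\<in>?D. x \<le> Ma" using 2 la lb by force
    moreover have "finite ?D" using fin by simp
    ultimately have MD: "Max ?D = Ma" by (intro Max_eqI) auto
    have "Ma \<notin> insert Mb (S bs')" using 2 lb by auto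
    then have "\<not> sq_less (S (as @ [a])) (S bs)" unfolding sq_less_def Sa Sb using MD by simp
    moreover have "sum_list bs < sum_list (as @ [a])" using 2 bs unfolding Ma_def Mb_def by simp
    ultimately show ?thesis by auto
  next
    case 3
    have Ma_n: "Ma \<notin> S as" "Ma \<notin> S bs'" using la lb 3 by auto
    have D: "(insert Ma (S as) - insert Ma (S bs')) \<union> (insert Ma (S bs') - insert Ma (S as))
        = (S as - S bs') \<union> (S bs' - S as)" using Ma_n by auto
    have ne: "insert Ma (S as) = insert Ma (S bs') \<longleftrightarrow> S as = S bs'" using Ma_n by auto
    have mem: "Max ((S as - S bs') \<union> (S bs' - S as)) \<in> insert Ma (S bs') \<longleftrightarrow>
        Max ((S as - S bs') \<union> (S bs' - S as)) \<in> S bs'" if "S as \<noteq> S bs'"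
    proof -
      have "(S as - S bs') \<union> (S bs' - S as) \<noteq> {}" using that by auto
      then have "Max ((S as - S bs') \<union> (S bs' - S as)) \<in> (S as - S bs') \<union> (S bs' - S as)"
        using fin by (intro Max_in) auto
      then show ?thesis using Ma_n by auto
    qed
    have "sq_less (S (as @ [a])) (S bs) \<longleftrightarrow> sq_less (S as) (S bs')"
      unfolding sq_less_def Sa Sb 3[symmetric] D ne using mem by blast
    also have "\<dots> \<longleftrightarrow> (sum_list as < sum_list bs' \<or> (sum_list as = sum_list bs' \<and> rl as bs'))"
      by (rule snoc.IH[OF bs(2)])
    also have "\<dots> \<longleftrightarrow> (sum_list (as @ [a]) < sum_list bs \<or> (sum_list (as @ [a]) = sum_list bs \<and> rl (as @ [a]) bs))"
      using 3 bs rla unfolding Ma_def Mb_def by auto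
    finally show ?thesis .
  qed
qed

definition sh :: "nat \<Rightarrow> nat \<Rightarrow> nat" where "sh k j = (if j < k then j else Suc j)"

lemma sh_small: "k \<le> Suc a \<Longrightarrow> sh k ` S (a # as) = S (Suc a # as)"
proof -
  assume k: "k \<le> Suc a"
  have "sh k ` S (a # as) = insert (Suc (Suc a)) (sh k ` (\<lambda>x. x + Suc a) ` S as)"
    using k unfolding sh_def by simp
  also have "sh k ` (\<lambda>x. x + Suc a) ` S as = (\<lambda>x. x + Suc (Suc a)) ` S as"
    unfolding image_image by (rule image_cong) (use k in \<open>auto simp: sh_def\<close>)
  finally show ?thesis by simp
qed

lemma sh_big: "Suc a < k \<Longrightarrow>
  sh k ` S (a # as) = insert (Suc a) ((\<lambda>x. x + Suc a) ` (sh (k - Suc a) ` S as))"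
proof -
  assume k: "Suc a < k"
  have "sh k ` S (a # as) = insert (Suc a) (sh k ` (\<lambda>x. x + Suc a) ` S as)"
    using k unfolding sh_def by simp
  also have "sh k ` (\<lambda>x. x + Suc a) ` S as = (\<lambda>x. x + Suc a) ` (sh (k - Suc a) ` S as)"
    unfolding image_image by (rule image_cong) (use k in \<open>auto simp: sh_def\<close>)
  finally show ?thesis .
qed

lemma sh_S: "1 \<le> k \<Longrightarrow> sh k ` S as = S as \<or> (\<exists>i<length as. sh k ` S as = S (as[i := Suc (as ! i)]))"
proof (induction as arbitrary: k)
  case Nil then show ?case by simp
next
  case (Cons a as)
  show ?case
  proof (cases "k \<le> Suc a")
    case True
    then have "sh k ` S (a # as) = S ((a # as)[0 := Suc ((a # as) ! 0)])" using sh_small by simp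
    then show ?thesis by blast
  next
    case False
    then have e: "sh k ` S (a # as) = insert (Suc a) ((\<lambda>x. x + Suc a) ` (sh (k - Suc a) ` S as))"
      using sh_big by simp
    have "1 \<le> k - Suc a" using False by simp
    then consider "sh (k - Suc a) ` S as = S as"
      | i where "i < length as" "sh (k - Suc a) ` S as = S (as[i := Suc (as ! i)])"
      using Cons.IH by blast
    then show ?thesis
    proof cases
      case 1 then show ?thesis using e by simp
    next
      case (2 i)
      then have "sh k ` S (a # as) = S ((a # as)[Suc i := Suc ((a # as) ! Suc i)])" using e by simp
      then show ?thesis using 2 by (intro disjI2 exI[of _ "Suc i"]) simp
    qed
  qed
qed

lemma S_sh: "i < length as \<Longrightarrow> \<exists>k\<ge>1. sh k ` S as = S (as[i := Suc (as ! i)])"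
proof (induction as arbitrary: i)
  case Nil then show ?case by simp
next
  case (Cons a as)
  show ?case
  proof (cases i)
    case 0
    then show ?thesis using sh_small[of 1 a as] by (intro exI[of _ 1]) simp
  next
    case (Suc i')
    have "i' < length as" using Cons.prems Suc by simp
    then obtain k' where k': "1 \<le> k'" "sh k' ` S as = S (as[i' := Suc (as ! i')])"
      using Cons.IH by blast
    have "sh (k' + Suc a) ` S (a # as) = insert (Suc a) ((\<lambda>x. x + Suc a) ` (sh k' ` S as))"
      using sh_big[of a "k' + Suc a" as] k' by simp
    then show ?thesis using k' Suc by (intro exI[of _ "k' + Suc a"]) simp
  qed
qed

lemma sh_Inc1: "1 \<le> k \<Longrightarrow> sh k \<in> Inc1"
  unfolding Inc1_def sh_def by auto

lemma id_Inc1: "(\<lambda>j. j) \<in> Inc1"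
  unfolding Inc1_def by auto

lemma Inc1_ge: "\<pi> \<in> Inc1 \<Longrightarrow> 1 \<le> j \<Longrightarrow> j \<le> \<pi> j"
proof (induction j)
  case 0 then show ?case by simp
next
  case (Suc j)
  show ?case
  proof (cases "j = 0")
    case True then show ?thesis using Suc.prems unfolding Inc1_def by auto
  next
    case False
    then have "j \<le> \<pi> j" using Suc by simp
    moreover have "\<pi> j < \<pi> (Suc j)" using Suc.prems False unfolding Inc1_def by auto
    ultimately show ?thesis by simp
  qed
qed

lemma Inc1_cases:
  assumes p: "\<pi> \<in> Inc1"
  shows "(\<forall>j\<ge>1. \<pi> j = j) \<or> (\<exists>k\<ge>1. \<forall>j\<ge>1. \<pi> j = sh k j)"
proof (cases "\<forall>j\<ge>1. \<pi> j = j")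
  case True then show ?thesis by simp
next
  case False
  then have ex: "\<exists>j. 1 \<le> j \<and> \<pi> j \<noteq> j" by auto
  define k where "k = (LEAST j. 1 \<le> j \<and> \<pi> j \<noteq> j)"
  have k1: "1 \<le> k" "\<pi> k \<noteq> k" unfolding k_def using LeastI_ex[OF ex] by auto
  have blw: "\<pi> j = j" if "1 \<le> j" "j < k" for j
    using not_less_Least[of j "\<lambda>j. 1 \<le> j \<and> \<pi> j \<noteq> j"] that unfolding k_def by auto
  have ub: "\<pi> j \<le> Suc j" if "1 \<le> j" for j using p that unfolding Inc1_def by auto
  have abv: "\<pi> j = Suc j" if "k \<le> j" for j
    using that
  proof (induction j rule: dec_induct)
    case base
    then show ?case using Inc1_ge[OF p k1(1)] ub[OF k1(1)] k1(2) by simp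
  next
    case (step j)
    have j1: "1 \<le> j" using step k1 by simp
    have "\<forall>j\<ge>1. \<pi> j < \<pi> (Suc j)" using p unfolding Inc1_def by blast
    then have "\<pi> j < \<pi> (Suc j)" using j1 by blast
    then show ?case using step ub[of "Suc j"] by simp
  qed
  have "\<forall>j\<ge>1. \<pi> j = sh k j"
    unfolding sh_def using blw abv by (metis not_le)
  then show ?thesis using k1 by blast
qed

lemma Inc_image: "\<pi> \<in> Inc1 \<Longrightarrow> 0 \<notin> u \<Longrightarrow> \<pi> ` u = u \<or> (\<exists>k\<ge>1. \<pi> ` u = sh k ` u)"
proof -
  assume p: "\<pi> \<in> Inc1" and u: "0 \<notin> u"
  have pos: "\<And>j. j \<in> u \<Longrightarrow> 1 \<le> j" using u by (metis less_one not_le)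
  from Inc1_cases[OF p] show ?thesis
  proof
    assume "\<forall>j\<ge>1. \<pi> j = j"
    then have "\<pi> ` u = (\<lambda>j. j) ` u" by (intro image_cong) (auto dest: pos)
    then show ?thesis by simp
  next
    assume "\<exists>k\<ge>1. \<forall>j\<ge>1. \<pi> j = sh k j"
    then obtain k where k: "1 \<le> k" "\<forall>j\<ge>1. \<pi> j = sh k j" by blast
    then have "\<pi> ` u = sh k ` u" by (intro image_cong) (auto dest: pos)
    then show ?thesis using k by blast
  qed
qed

definition dec :: "nat list \<Rightarrow> nat set" where "dec c = S (butlast c)"

definition DD :: "nat \<Rightarrow> nat \<Rightarrow> nat set set" where
  "DD d B = {u. finite u \<and> card u = d \<and> 0 \<notin> u \<and> (\<forall>x\<in>u. x \<le> B)}"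

lemma Mon_split: assumes "c \<in> Mon (Suc d) T"
  obtains as z where "c = as @ [z]" "length as = d" "sum_list as + z = T"
proof -
  have l: "length c = Suc d" "sum_list c = T" using assms unfolding Mon_def by auto
  then have "c \<noteq> []" by auto
  then obtain as z where e: "c = as @ [z]" by (metis append_butlast_last_id)
  then show ?thesis using that l by simp
qed

lemma dec_DD: "c \<in> Mon (Suc d) T \<Longrightarrow> dec c \<in> DD d (T + d)"
proof -
  assume c: "c \<in> Mon (Suc d) T"
  obtain as z where sp: "c = as @ [z]" "length as = d" "sum_list as + z = T" using Mon_split[OF c] .
  have "\<forall>x\<in>S as. x \<le> T + d"
    using S_bound[of _ as] sp by fastforce
  moreover have "dec c = S as" unfolding dec_def sp by simp
  ultimately show ?thesis unfolding DD_def using sp finite_S card_S S_pos by fastforce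
qed

lemma dec_inj: "inj_on dec (Mon (Suc d) T)"
proof (rule inj_onI)
  fix c c' assume c: "c \<in> Mon (Suc d) T" and c': "c' \<in> Mon (Suc d) T" and e: "dec c = dec c'"
  obtain as z where sp: "c = as @ [z]" "length as = d" "sum_list as + z = T" using Mon_split[OF c] .
  obtain as' z' where sp': "c' = as' @ [z']" "length as' = d" "sum_list as' + z' = T" using Mon_split[OF c'] .
  have "as = as'" using S_inj e sp sp' unfolding dec_def by simp
  moreover then have "z = z'" using sp sp' by simp
  ultimately show "c = c'" using sp sp' by simp
qed

lemma dec_surj: "u \<in> DD d (T + d) \<Longrightarrow> \<exists>c\<in>Mon (Suc d) T. dec c = u"
proof -
  assume u: "u \<in> DD d (T + d)"
  then obtain as where as: "length as = d" "S as = u" using S_surj unfolding DD_def by blast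
  have "sum_list as \<le> T"
  proof (cases "as = []")
    case True then show ?thesis by simp
  next
    case False
    then have "sum_list as + length as \<in> u" using S_max[OF False] as by simp
    then show ?thesis using u as unfolding DD_def by fastforce
  qed
  then have "as @ [T - sum_list as] \<in> Mon (Suc d) T" unfolding Mon_def using as by simp
  moreover have "dec (as @ [T - sum_list as]) = u" unfolding dec_def using as by simp
  ultimately show ?thesis by blast
qed

lemma dec_image: "dec ` Mon (Suc d) T = DD d (T + d)"
  using dec_DD dec_surj by blast

lemma rl_dec: "c \<in> Mon (Suc d) T \<Longrightarrow> c' \<in> Mon (Suc d) T \<Longrightarrow> rl c' c \<longleftrightarrow> sq_less (dec c') (dec c)"
proof -
  assume c: "c \<in> Mon (Suc d) T" and c': "c' \<in> Mon (Suc d) T"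
  obtain as z where sp: "c = as @ [z]" "length as = d" "sum_list as + z = T" using Mon_split[OF c] .
  obtain as' z' where sp': "c' = as' @ [z']" "length as' = d" "sum_list as' + z' = T" using Mon_split[OF c'] .
  have len: "length as' = length as" using sp sp' by simp
  have "rl c' c \<longleftrightarrow> (z < z' \<or> (z' = z \<and> rl as' as))"
    using rl_append[OF len, of "[z']" "[z]"] sp sp' by auto
  also have "\<dots> \<longleftrightarrow> (sum_list as' < sum_list as \<or> (sum_list as' = sum_list as \<and> rl as' as))"
    using sp sp' by auto
  also have "\<dots> \<longleftrightarrow> sq_less (S as') (S as)" using sq_less_S[OF len] by simp
  also have "S as' = dec c'" unfolding dec_def sp' by simp
  also have "S as = dec c" unfolding dec_def sp by simp
  finally show ?thesis .
qed

lemma sq_less_bound: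
  assumes fin: "finite u" "finite v" and ub: "\<forall>x\<in>u. x \<le> B" and sq: "sq_less v u"
  shows "\<forall>x\<in>v. x \<le> B"
proof (rule ccontr)
  assume "\<not> (\<forall>x\<in>v. x \<le> B)"
  then obtain y where y: "y \<in> v" "B < y" by auto
  let ?D = "(v - u) \<union> (u - v)"
  have yD: "y \<in> ?D" using y ub by auto
  have "y \<le> Max ?D" using yD fin by (intro Max_ge) auto
  moreover have "Max ?D \<in> u" using sq unfolding sq_less_def by simp
  ultimately show False using ub y by fastforce
qed

lemma pred_dec:
  assumes c: "c \<in> Mon (Suc d) T"
  shows "{v \<in> dsets d. sq_less v (dec c)} = dec ` {c'\<in>Mon (Suc d) T. rl c' c}"
proof (intro set_eqI iffI)
  fix v assume v: "v \<in> {v \<in> dsets d. sq_less v (dec c)}"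
  have dc: "dec c \<in> DD d (T + d)" by (rule dec_DD[OF c])
  have "\<forall>x\<in>v. x \<le> T + d"
    using sq_less_bound[of "dec c" v "T + d"] v dc unfolding dsets_def DD_def by blast
  then have "v \<in> DD d (T + d)" using v unfolding dsets_def DD_def by blast
  then obtain c' where c': "c' \<in> Mon (Suc d) T" "dec c' = v" using dec_surj by blast
  then have "rl c' c" using rl_dec[OF c c'(1)] v by simp
  then show "v \<in> dec ` {c'\<in>Mon (Suc d) T. rl c' c}" using c' by blast
next
  fix v assume "v \<in> dec ` {c'\<in>Mon (Suc d) T. rl c' c}"
  then obtain c' where c': "c' \<in> Mon (Suc d) T" "rl c' c" "v = dec c'" by blast
  have "v \<in> dsets d" using dec_DD[OF c'(1)] c' unfolding DD_def dsets_def by blast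
  moreover have "sq_less v (dec c)" using rl_dec[OF c c'(1)] c' by simp
  ultimately show "v \<in> {v \<in> dsets d. sq_less v (dec c)}" by blast
qed

lemma card_pred_dec:
  assumes c: "c \<in> Mon (Suc d) T"
  shows "card {v \<in> dsets d. sq_less v (dec c)} = rkM (Suc d) T c"
proof -
  have "card {v \<in> dsets d. sq_less v (dec c)} = card (dec ` {c'\<in>Mon (Suc d) T. rl c' c})"
    using pred_dec[OF c] by simp
  also have "\<dots> = card {c'\<in>Mon (Suc d) T. rl c' c}"
    by (rule card_image) (rule inj_on_subset[OF dec_inj], blast)
  finally show ?thesis unfolding rkM_def sto.rk_def[OF sto_Mon] .
qed

lemma dec_up1:
  assumes c: "c \<in> Mon (Suc d) T"
  shows "{\<pi> ` dec c | \<pi>. \<pi> \<in> Inc1} = dec ` up {c}"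
proof -
  obtain as z where cz: "c = as @ [z]" "length as = d" "sum_list as + z = T" using Mon_split[OF c] .
  have upc: "up {c} = (\<lambda>i. (as[i := Suc (as ! i)]) @ [z]) ` {..<d} \<union> {as @ [Suc z]}"
  proof (intro set_eqI iffI)
    fix m assume "m \<in> up {c}"
    then obtain i where i: "i < Suc d" "m = c[i := Suc (c ! i)]" unfolding up_def using cz by auto
    show "m \<in> (\<lambda>i. (as[i := Suc (as ! i)]) @ [z]) ` {..<d} \<union> {as @ [Suc z]}"
    proof (cases "i < d")
      case True
      then have "m = (as[i := Suc (as ! i)]) @ [z]" using i cz by (simp add: list_update_append nth_append)
      then show ?thesis using True by blast
    next
      case False
      then have "i = d" using i by simp
      then have "m = as @ [Suc z]" using i cz by (simp add: list_update_append nth_append)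
      then show ?thesis by blast
    qed
  next
    fix m assume "m \<in> (\<lambda>i. (as[i := Suc (as ! i)]) @ [z]) ` {..<d} \<union> {as @ [Suc z]}"
    then consider i where "i < d" "m = (as[i := Suc (as ! i)]) @ [z]" | "m = as @ [Suc z]" by blast
    then show "m \<in> up {c}"
    proof cases
      case (1 i)
      then have "m = c[i := Suc (c ! i)]" using cz by (simp add: list_update_append nth_append)
      then show ?thesis unfolding up_def using 1 cz by auto
    next
      case 2
      then have "m = c[d := Suc (c ! d)]" using cz by (simp add: list_update_append nth_append)
      then show ?thesis unfolding up_def using cz by auto
    qed
  qed
  have decup: "dec ` up {c} = (\<lambda>i. S (as[i := Suc (as ! i)])) ` {..<d} \<union> {S as}"
    unfolding upc image_Un image_image dec_def by simp
  have dc: "dec c = S as" unfolding dec_def cz by simp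
  have pos: "0 \<notin> S as" using S_pos by blast
  show ?thesis unfolding decup dc
  proof (intro set_eqI iffI)
    fix w assume "w \<in> {\<pi> ` S as | \<pi>. \<pi> \<in> Inc1}"
    then obtain \<pi> where p: "\<pi> \<in> Inc1" "w = \<pi> ` S as" by blast
    from Inc_image[OF p(1) pos] show "w \<in> (\<lambda>i. S (as[i := Suc (as ! i)])) ` {..<d} \<union> {S as}"
    proof
      assume "\<pi> ` S as = S as" then show ?thesis using p by simp
    next
      assume "\<exists>k\<ge>1. \<pi> ` S as = sh k ` S as"
      then obtain k where k: "1 \<le> k" "\<pi> ` S as = sh k ` S as" by blast
      from sh_S[OF k(1), of as] show ?thesis using p k cz by auto
    qed
  next
    fix w assume "w \<in> (\<lambda>i. S (as[i := Suc (as ! i)])) ` {..<d} \<union> {S as}"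
    then consider i where "i < d" "w = S (as[i := Suc (as ! i)])" | "w = S as" by blast
    then show "w \<in> {\<pi> ` S as | \<pi>. \<pi> \<in> Inc1}"
    proof cases
      case (1 i)
      then obtain k where "1 \<le> k" "sh k ` S as = w" using S_sh[of i as] cz by auto
      then show ?thesis using sh_Inc1 by blast
    next
      case 2
      then have "w = (\<lambda>j. j) ` S as" by simp
      then show ?thesis using id_Inc1 by blast
    qed
  qed
qed

lemma IncF_dec:
  assumes G: "G \<subseteq> Mon (Suc d) T"
  shows "IncF (dec ` G) = dec ` up G"
proof -
  have "IncF (dec ` G) = (\<Union>c\<in>G. {\<pi> ` dec c | \<pi>. \<pi> \<in> Inc1})"
  proof (intro set_eqI iffI)
    fix w assume "w \<in> IncF (dec ` G)"
    then obtain u \<pi> where "w = \<pi> ` u" "u \<in> dec ` G" "\<pi> \<in> Inc1" unfolding IncF_def by blast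
    then obtain c where "c \<in> G" "w = \<pi> ` dec c" "\<pi> \<in> Inc1" by blast
    then show "w \<in> (\<Union>c\<in>G. {\<pi> ` dec c | \<pi>. \<pi> \<in> Inc1})" by blast
  next
    fix w assume "w \<in> (\<Union>c\<in>G. {\<pi> ` dec c | \<pi>. \<pi> \<in> Inc1})"
    then obtain c \<pi> where "c \<in> G" "w = \<pi> ` dec c" "\<pi> \<in> Inc1" by blast
    then show "w \<in> IncF (dec ` G)" unfolding IncF_def by blast
  qed
  also have "\<dots> = (\<Union>c\<in>G. dec ` up {c})"
  proof (rule SUP_cong[OF refl])
    fix c assume "c \<in> G"
    then show "{\<pi> ` dec c | \<pi>. \<pi> \<in> Inc1} = dec ` up {c}" using dec_up1 G by blast
  qed
  also have "\<dots> = dec ` (\<Union>c\<in>G. up {c})" by (rule image_UN[symmetric])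
  also have "(\<Union>c\<in>G. up {c}) = up G" unfolding up_def by blast
  finally show ?thesis .
qed

lemma finite_pred: "finite u \<Longrightarrow> finite {v \<in> dsets d. sq_less v u}"
proof -
  assume fu: "finite u"
  define B where "B = Max (insert 0 u)"
  have ub: "\<forall>x\<in>u. x \<le> B" unfolding B_def using fu by simp
  have "{v \<in> dsets d. sq_less v u} \<subseteq> Pow {..B}"
    using sq_less_bound[OF fu _ ub] unfolding dsets_def by blast
  then show ?thesis by (rule finite_subset) simp
qed

lemma card_DD_le: "u \<in> DD d m \<Longrightarrow> d \<le> m"
proof -
  assume u: "u \<in> DD d m"
  then have "u \<subseteq> {1..m}" unfolding DD_def by (auto simp: Suc_le_eq intro: Nat.gr0I)
  then have "card u \<le> card {1..m}" by (intro card_mono) auto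
  then show ?thesis using u unfolding DD_def by simp
qed

lemma compr_dec:
  assumes d: "1 \<le> d" and Fm: "F \<subseteq> DD d m" and dm: "d \<le> m"
    and G: "G = {c \<in> Mon (Suc d) (m - d). dec c \<in> F}"
  shows "compr d F = dec ` L (Suc d) (m - d) (card F)"
proof -
  let ?T = "m - d"
  have Tm: "?T + d = m" using dm by simp
  have GM: "G \<subseteq> Mon (Suc d) ?T" using G by blast
  have decG: "dec ` G = F"
  proof
    show "dec ` G \<subseteq> F" unfolding G by blast
    show "F \<subseteq> dec ` G"
    proof
      fix x assume x: "x \<in> F"
      then have "x \<in> DD d (?T + d)" using Fm Tm by auto
      then obtain c where "c \<in> Mon (Suc d) ?T" "dec c = x" using dec_surj by blast
      then show "x \<in> dec ` G" unfolding G using x by blast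
    qed
  qed
  have cG: "card G = card F" using decG card_image[OF inj_on_subset[OF dec_inj GM]] by simp
  show ?thesis
  proof (intro set_eqI iffI)
    fix u assume u: "u \<in> compr d F"
    then have ud: "u \<in> dsets d" and uc: "card {v \<in> dsets d. sq_less v u} < card F"
      unfolding compr_def by auto
    have fu: "finite u" using ud unfolding dsets_def by simp
    have uDD: "u \<in> DD d m"
    proof (rule ccontr)
      assume nu: "u \<notin> DD d m"
      then obtain x where x: "x \<in> u" "m < x" using ud unfolding DD_def dsets_def by auto
      define y where "y = Max u"
      have "u \<noteq> {}" using x by auto
      then have yu: "y \<in> u" unfolding y_def using fu by simp
      have xy: "x \<le> y" unfolding y_def using fu x by simp
      have "DD d m \<subseteq> {v \<in> dsets d. sq_less v u}"
      proof
        fix v assume v: "v \<in> DD d m"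
        have fv: "finite v" using v unfolding DD_def by simp
        let ?D = "(v - u) \<union> (u - v)"
        have "y \<notin> v" using v x xy unfolding DD_def by fastforce
        then have yD: "y \<in> ?D" using yu by simp
        have "\<forall>z\<in>?D. z \<le> y"
        proof
          fix z assume "z \<in> ?D"
          then have "z \<in> v \<or> z \<in> u" by blast
          then show "z \<le> y"
          proof
            assume "z \<in> v" then show ?thesis using v x xy unfolding DD_def by fastforce
          next
            assume "z \<in> u" then show ?thesis unfolding y_def using fu by simp
          qed
        qed
        then have "Max ?D = y" using yD fv fu by (intro Max_eqI) auto
        then have "sq_less v u" unfolding sq_less_def using yu \<open>y \<notin> v\<close> by auto
        moreover have "v \<in> dsets d" using v unfolding DD_def dsets_def by simp
        ultimately show "v \<in> {v \<in> dsets d. sq_less v u}" by blast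
      qed
      then have "card (DD d m) \<le> card {v \<in> dsets d. sq_less v u}"
        using finite_pred[OF fu] by (rule card_mono[rotated])
      moreover have "card (DD d m) = card (Mon (Suc d) ?T)"
        using dec_image[of d ?T] Tm card_image[OF dec_inj] by metis
      moreover have "card G \<le> card (Mon (Suc d) ?T)" by (rule card_mono[OF finite_Mon GM])
      ultimately show False using uc cG by linarith
    qed
    then obtain c where c: "c \<in> Mon (Suc d) ?T" "dec c = u" using dec_surj[of u d ?T] Tm by auto
    have "rkM (Suc d) ?T c < card F" using card_pred_dec[OF c(1)] uc c by simp
    then have "c \<in> L (Suc d) ?T (card F)"
      unfolding L_def sto.seg_def[OF sto_Mon] rkM_def using c by simp
    then show "u \<in> dec ` L (Suc d) ?T (card F)" using c by blast
  next
    fix u assume "u \<in> dec ` L (Suc d) ?T (card F)"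
    then obtain c where c: "c \<in> L (Suc d) ?T (card F)" "u = dec c" by blast
    have cM: "c \<in> Mon (Suc d) ?T" using c L_sub by blast
    have "rkM (Suc d) ?T c < card F"
      using c unfolding L_def sto.seg_def[OF sto_Mon] rkM_def by simp
    then have "card {v \<in> dsets d. sq_less v u} < card F" using card_pred_dec[OF cM] c by simp
    moreover have "u \<in> dsets d" using dec_DD[OF cM] c unfolding DD_def dsets_def by blast
    ultimately show "u \<in> compr d F" unfolding compr_def by blast
  qed
qed

lemma fam:
  assumes d: "1 \<le> d" and Fm: "F \<subseteq> DD d m"
  shows "IncF (compr d F) \<subseteq> compr d (IncF F)"
proof (cases "F = {}")
  case True
  then have "compr d F = {}" unfolding compr_def by simp
  then show ?thesis unfolding IncF_def by simp
next
  case False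
  then obtain u0 where "u0 \<in> F" by blast
  then have dm: "d \<le> m" using Fm card_DD_le by blast
  let ?T = "m - d"
  have Tm: "?T + d = m" using dm by simp
  define G where "G = {c \<in> Mon (Suc d) ?T. dec c \<in> F}"
  have GM: "G \<subseteq> Mon (Suc d) ?T" unfolding G_def by blast
  have decG: "dec ` G = F"
  proof
    show "dec ` G \<subseteq> F" unfolding G_def by blast
    show "F \<subseteq> dec ` G"
    proof
      fix x assume x: "x \<in> F"
      then have "x \<in> DD d (?T + d)" using Fm Tm by auto
      then obtain c where "c \<in> Mon (Suc d) ?T" "dec c = x" using dec_surj by blast
      then show "x \<in> dec ` G" unfolding G_def using x by blast
    qed
  qed
  have cG: "card G = card F" using decG card_image[OF inj_on_subset[OF dec_inj GM]] by simp
  let ?L = "L (Suc d) ?T (card F)"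
  have LM: "?L \<subseteq> Mon (Suc d) ?T" by (rule L_sub)
  have cF: "compr d F = dec ` ?L" using compr_dec[OF d Fm dm G_def] .
  have I1: "IncF (compr d F) = dec ` up ?L" unfolding cF by (rule IncF_dec[OF LM])
  have I2: "IncF F = dec ` up G" unfolding decG[symmetric] by (rule IncF_dec[OF GM])
  have upLM: "up ?L \<subseteq> Mon (Suc d) (Suc ?T)" using up_Mon[OF LM] .
  have upGM: "up G \<subseteq> Mon (Suc d) (Suc ?T)" using up_Mon[OF GM] .
  have upL: "up ?L = L (Suc d) (Suc ?T) (card (up ?L))" using dcl_eq_L[OF dcl_up_L] .
  have mac: "card (up ?L) \<le> card (up G)" using macaulay[of "Suc d" G ?T] GM cG by simp
  have cI: "card (IncF F) = card (up G)"
    unfolding I2 by (rule card_image[OF inj_on_subset[OF dec_inj upGM]])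
  show ?thesis
  proof
    fix w assume "w \<in> IncF (compr d F)"
    then obtain c where c: "c \<in> up ?L" "w = dec c" using I1 by blast
    have cM: "c \<in> Mon (Suc d) (Suc ?T)" using c upLM by blast
    have "c \<in> L (Suc d) (Suc ?T) (card (up ?L))" using c upL by simp
    then have "rkM (Suc d) (Suc ?T) c < card (up ?L)"
      unfolding L_def sto.seg_def[OF sto_Mon] rkM_def by simp
    then have "card {v \<in> dsets d. sq_less v w} < card (IncF F)"
      using card_pred_dec[OF cM] c mac cI by simp
    moreover have "w \<in> dsets d" using dec_DD[OF cM] c unfolding DD_def dsets_def by blast
    ultimately show "w \<in> compr d (IncF F)" unfolding compr_def by blast
  qed
qed

lemma Inc1_inj: "\<pi> \<in> Inc1 \<Longrightarrow> 0 \<notin> u \<Longrightarrow> inj_on \<pi> u"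
proof -
  assume p: "\<pi> \<in> Inc1" and u: "0 \<notin> u"
  have pos: "\<And>j. j \<in> u \<Longrightarrow> 1 \<le> j" using u by (metis less_one not_le)
  from Inc1_cases[OF p] show ?thesis
  proof
    assume h: "\<forall>j\<ge>1. \<pi> j = j"
    show ?thesis by (rule inj_onI) (use h pos in metis)
  next
    assume "\<exists>k\<ge>1. \<forall>j\<ge>1. \<pi> j = sh k j"
    then obtain k where k: "\<forall>j\<ge>1. \<pi> j = sh k j" by blast
    show ?thesis
    proof (rule inj_onI)
      fix x y assume "x \<in> u" "y \<in> u" "\<pi> x = \<pi> y"
      then have "sh k x = sh k y" using k pos by metis
      then show "x = y" unfolding sh_def by (auto split: if_splits)
    qed
  qed
qed

lemma faces_IncF: "1 \<le> d \<Longrightarrow> (\<forall>F\<in>\<Delta>. finite F \<and> 0 \<notin> F) \<Longrightarrow>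
    faces d (Inc_cx \<Delta>) = IncF (faces d \<Delta>)"
proof -
  assume d: "1 \<le> d" and D: "\<forall>F\<in>\<Delta>. finite F \<and> 0 \<notin> F"
  have cardI: "finite w \<and> card w = d'" if wI: "w \<in> IncF (faces d' \<Delta>)" for w d'
  proof -
    obtain u \<pi> where u: "w = \<pi> ` u" "u \<in> faces d' \<Delta>" "\<pi> \<in> Inc1" using wI unfolding IncF_def by blast
    then have "finite u" "0 \<notin> u" "card u = d'" using D unfolding faces_def by auto
    then show ?thesis using u card_image[OF Inc1_inj] by simp
  qed
  show ?thesis
  proof (intro set_eqI iffI)
    fix w assume "w \<in> faces d (Inc_cx \<Delta>)"
    then have w: "w \<in> Inc_cx \<Delta>" "finite w" "card w = d" unfolding faces_def by auto
    then have "w \<noteq> {}" using d by auto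
    then obtain d' where "w \<in> IncF (faces d' \<Delta>)" using w unfolding Inc_cx_def by auto
    moreover then have "d' = d" using cardI w by metis
    ultimately show "w \<in> IncF (faces d \<Delta>)" by simp
  next
    fix w assume w: "w \<in> IncF (faces d \<Delta>)"
    then have "w \<in> Inc_cx \<Delta>" unfolding Inc_cx_def using d by auto
    then show "w \<in> faces d (Inc_cx \<Delta>)" using cardI[OF w] unfolding faces_def by auto
  qed
qed

lemma faces_compr: "1 \<le> d \<Longrightarrow> faces d (compr_cx \<Delta>) = compr d (faces d \<Delta>)"
proof (intro set_eqI iffI)
  fix w assume d: "1 \<le> d" and "w \<in> faces d (compr_cx \<Delta>)"
  then have w: "w \<in> compr_cx \<Delta>" "finite w" "card w = d" unfolding faces_def by auto
  then have "w \<noteq> {}" using d by auto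
  then obtain d' where w': "w \<in> compr d' (faces d' \<Delta>)" using w unfolding compr_cx_def by auto
  then have "card w = d'" unfolding compr_def dsets_def by auto
  then show "w \<in> compr d (faces d \<Delta>)" using w w' by simp
next
  fix w assume d: "1 \<le> d" and w: "w \<in> compr d (faces d \<Delta>)"
  then have "w \<in> compr_cx \<Delta>" unfolding compr_cx_def by auto
  moreover have "finite w" "card w = d" using w unfolding compr_def dsets_def by auto
  ultimately show "w \<in> faces d (compr_cx \<Delta>)" unfolding faces_def by auto
qed

theorem corollary4p2:
  fixes m :: nat and \<Delta> :: "nat set set"
  assumes "simplicial_complex_on m \<Delta>"
  shows "Inc_cx (compr_cx \<Delta>) \<subseteq> compr_cx (Inc_cx \<Delta>)"
proof
  have sub: "\<forall>F\<in>\<Delta>. F \<subseteq> {1..m}" using assms unfolding simplicial_complex_on_def by blast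
  have D: "\<forall>F\<in>\<Delta>. finite F \<and> 0 \<notin> F" using sub by (meson atLeastAtMost_iff finite_atLeastAtMost finite_subset not_one_le_zero subsetD)
  have FD: "faces d \<Delta> \<subseteq> DD d m" for d
    unfolding faces_def DD_def using sub D by fastforce
  fix w assume "w \<in> Inc_cx (compr_cx \<Delta>)"
  then consider "w = {}" | d where "1 \<le> d" "w \<in> IncF (faces d (compr_cx \<Delta>))"
    unfolding Inc_cx_def by auto
  then show "w \<in> compr_cx (Inc_cx \<Delta>)"
  proof cases
    case 1 then show ?thesis unfolding compr_cx_def by simp
  next
    case (2 d)
    then have "w \<in> IncF (compr d (faces d \<Delta>))" using faces_compr by simp
    then have "w \<in> compr d (IncF (faces d \<Delta>))" using fam[OF 2(1) FD] by blast
    then have "w \<in> compr d (faces d (Inc_cx \<Delta>))" using faces_IncF[OF 2(1) D] by simp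
    then show ?thesis unfolding compr_cx_def using 2(1) by auto
  qed
qed

end
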